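(* Let $\mathcal P=\mathcal P(V,R)$ be a binary quadratic operad over a field $\Bbbk$ (with $\dim V<\infty$) which is a Dong operad. Then the operads $\mathrm{di}\,\mathcal P=\mathrm{Perm}\otimes\mathcal P$ and $\mathrm{tri}\,\mathcal P=\mathrm{ComTriAs}\otimes\mathcal P$ (Hadamard products, governing the di- and tri-algebra replications of $\mathcal P$-algebras) are also Dong operads.
   Context: A binary quadratic operad $\mathcal P(V,R)$ is generated by a finite-dimensional $S_2$-module $V$ of binary operations with relations $R\subseteq\mathcal F_V(3)$, where $\mathcal F_V$ is the free operad on $V$. $\mathrm{Perm}$ is the operad of Perm algebras (associative algebras with $(xy)z=(yx)z$), $\mathrm{ComTriAs}$ the operad of commutative triassociative algebras; $\otimes$ denotes the Hadamard (arity-wise tensor) product of operads. Formal distributions and the Dong Property: for an algebra $A$ with a family of bilinear operations (the operations of $V$, a family closed under the $S_2$-action), a formal distribution over $A$ is a series $a(z)=\sum_{s\in\mathbb Z}a(s)z^{-s-1}$ with $a(s)\in A$. Two distributions $a(z),b(z)$ are local if for every operation $*$ there is $N\ge0$ with $(w-z)^N a(w)*b(z)=0$ in $A[[z,z^{-1},w,w^{-1}]]$ (and likewise with $a,b$ interchanged). For $n\in\mathbb Z_+$ and an operation $*$, the $n$-product is $(a\,{*}_{(n)}\,b)(w)=\mathrm{Res}_{\xi=0}(\xi-w)^n a(\xi)*b(w)$. An operad $\mathcal P$ is a Dong operad (satisfies the Dong Property) if for every $\mathcal P$-algebra $A$ and every three pairwise local formal distributions $a(z),b(z),c(z)$ over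 $A$, the distributions $(a\,{*}_{(n)}\,b)(z)$ and $c(z)$ are local for every $n\in\mathbb Z_+$ and every operation $*$. *)

theory Defs
  imports Main
begin

text \<open>Variables of arity 3, Perm(2) basis (marked input), ComTriAs(2) basis (nonempty subsets of {1,2}).\<close>
datatype v3 = X1 | X2 | X3
datatype two = T1 | T2
datatype ct2 = C1 | C2 | C12

instance v3 :: finite
proof
  have "UNIV = {X1, X2, X3}" by (auto intro: v3.exhaust)
  then show "finite (UNIV :: v3 set)" by (metis finite.emptyI finite_insert)
qed

instance two :: finite
proof
  have "UNIV = {T1, T2}" by (auto intro: two.exhaust)
  then show "finite (UNIV :: two set)" by (metis finite.emptyI finite_insert)
qed

instance ct2 :: finite
proof
  have "UNIV = {C1, C2, C12}" by (auto intro: ct2.exhaust)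
  then show "finite (UNIV :: ct2 set)" by (metis finite.emptyI finite_insert)
qed

text \<open>A binary quadratic operad P(V,R): V = k^'o (basis 'o, finite), with S2-action given by the
  matrix tau (tau applied to basis vector mu is  sum_nu tau mu nu * nu, and (tau v)(x,y) = v(y,x)),
  and R a set of elements of F_V(3). An element of F_V(3) is represented by coefficients c on tree
  monomials (mu,nu,a,b,c) standing for  mu(nu(x_a,x_b),x_c)  (a,b,c pairwise distinct).\<close>
type_synonym ('o,'k) mon3 = "'o \<times> 'o \<times> v3 \<times> v3 \<times> v3"
type_synonym ('o,'k) bqop = "('o \<Rightarrow> 'o \<Rightarrow> 'k) \<times> (('o \<times> 'o \<times> v3 \<times> v3 \<times> v3 \<Rightarrow> 'k) set)"

definition dist3 :: "v3 \<Rightarrow> v3 \<Rightarrow> v3 \<Rightarrow> bool" where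
  "dist3 a b c \<longleftrightarrow> a \<noteq> b \<and> b \<noteq> c \<and> a \<noteq> c"

definition bq_operad :: "('o::finite, 'k::field) bqop \<Rightarrow> bool" where
  "bq_operad P \<longleftrightarrow>
     (\<forall>\<mu> \<kappa>. (\<Sum>\<nu>\<in>UNIV. fst P \<mu> \<nu> * fst P \<nu> \<kappa>) = (if \<mu> = \<kappa> then 1 else 0)) \<and>
     (\<forall>r\<in>snd P. \<forall>\<mu> \<nu> a b c. \<not> dist3 a b c \<longrightarrow> r (\<mu>, \<nu>, a, b, c) = 0)"

definition fspan :: "('m \<Rightarrow> 'k::field) set \<Rightarrow> ('m \<Rightarrow> 'k) set" where
  "fspan S = {g. \<exists>F u. finite F \<and> F \<subseteq> S \<and> g = (\<lambda>m. \<Sum>f\<in>F. u f * f m)}"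

definition emono :: "'m \<Rightarrow> 'm \<Rightarrow> 'k::field" where
  "emono m = (\<lambda>m'. if m' = m then 1 else 0)"

text \<open>Kernel of the representation map onto F_V(3): nu(x_a,x_b) = (tau nu)(x_b,x_a).\<close>
definition Ktau :: "('o::finite \<Rightarrow> 'o \<Rightarrow> 'k::field) \<Rightarrow> (('o \<times> 'o \<times> v3 \<times> v3 \<times> v3) \<Rightarrow> 'k) set" where
  "Ktau tau = {(\<lambda>m. emono (\<mu>, \<nu>, a, b, c) m - (\<Sum>\<nu>'\<in>UNIV. tau \<nu> \<nu>' * emono (\<mu>, \<nu>', b, a, c) m))
                | \<mu> \<nu> a b c. dist3 a b c}"

definition act3 :: "(v3 \<Rightarrow> v3) \<Rightarrow> ('o \<times> 'o \<times> v3 \<times> v3 \<times> v3 \<Rightarrow> 'k) \<Rightarrow> ('o \<times> 'o \<times> v3 \<times> v3 \<times> v3 \<Rightarrow> 'k)" where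
  "act3 \<sigma> r = (\<lambda>(\<mu>, \<nu>, a, b, c). r (\<mu>, \<nu>, \<sigma> a, \<sigma> b, \<sigma> c))"

text \<open>Arity-3 component of the operadic ideal generated by R (pulled back to representatives).\<close>
definition ideal3 :: "('o::finite, 'k::field) bqop \<Rightarrow> ('o \<times> 'o \<times> v3 \<times> v3 \<times> v3 \<Rightarrow> 'k) set" where
  "ideal3 P = fspan ({act3 \<sigma> r | \<sigma> r. bij \<sigma> \<and> r \<in> snd P} \<union> Ktau (fst P))"

text \<open>sel p q a b c = label in Q(3) of the composite tree  p(q(x_a,x_b),x_c)  in the set operad Q.\<close>
definition sel_perm :: "two \<Rightarrow> two \<Rightarrow> v3 \<Rightarrow> v3 \<Rightarrow> v3 \<Rightarrow> v3" where
  "sel_perm p q a b c = (case p of T2 \<Rightarrow> c | T1 \<Rightarrow> (case q of T1 \<Rightarrow> a | T2 \<Rightarrow> b))"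

definition ct_has1 :: "ct2 \<Rightarrow> bool" where "ct_has1 p \<longleftrightarrow> p \<noteq> C2"
definition ct_has2 :: "ct2 \<Rightarrow> bool" where "ct_has2 p \<longleftrightarrow> p \<noteq> C1"

definition sel_ct :: "ct2 \<Rightarrow> ct2 \<Rightarrow> v3 \<Rightarrow> v3 \<Rightarrow> v3 \<Rightarrow> v3 set" where
  "sel_ct p q a b c =
     (if ct_has1 p then (if ct_has1 q then {a} else {}) \<union> (if ct_has2 q then {b} else {}) else {})
     \<union> (if ct_has2 p then {c} else {})"

definition swp_perm :: "two \<Rightarrow> two" where "swp_perm p = (case p of T1 \<Rightarrow> T2 | T2 \<Rightarrow> T1)"
definition swp_ct :: "ct2 \<Rightarrow> ct2" where "swp_ct p = (case p of C1 \<Rightarrow> C2 | C2 \<Rightarrow> C1 | C12 \<Rightarrow> C12)"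

definition had_tau :: "('l \<Rightarrow> 'l) \<Rightarrow> ('o \<Rightarrow> 'o \<Rightarrow> 'k::field) \<Rightarrow> ('o \<times> 'l) \<Rightarrow> ('o \<times> 'l) \<Rightarrow> 'k" where
  "had_tau swp tau = (\<lambda>(\<mu>, p) (\<nu>, q). tau \<mu> \<nu> * (if q = swp p then 1 else 0))"

text \<open>Relations of the Hadamard product Q (x) P in arity 3: kernel of F_W(3) -> Q(3) (x) P(3),
  W = Q(2) (x) V.\<close>
definition had_rel :: "('o::finite, 'k::field) bqop \<Rightarrow> ('l::finite \<Rightarrow> 'l \<Rightarrow> v3 \<Rightarrow> v3 \<Rightarrow> v3 \<Rightarrow> 's)
     \<Rightarrow> (('o \<times> 'l) \<times> ('o \<times> 'l) \<times> v3 \<times> v3 \<times> v3 \<Rightarrow> 'k) set" where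
  "had_rel P sel = {r. (\<forall>\<mu> \<nu> a b c. \<not> dist3 a b c \<longrightarrow> r (\<mu>, \<nu>, a, b, c) = 0) \<and>
      (\<forall>s. (\<lambda>(\<mu>, \<nu>, a, b, c). \<Sum>pq\<in>{pq. sel (fst pq) (snd pq) a b c = s}.
              r ((\<mu>, fst pq), (\<nu>, snd pq), a, b, c)) \<in> ideal3 P)}"

definition di :: "('o::finite, 'k::field) bqop \<Rightarrow> ('o \<times> two, 'k) bqop" where
  "di P = (had_tau swp_perm (fst P), had_rel P sel_perm)"

definition tri :: "('o::finite, 'k::field) bqop \<Rightarrow> ('o \<times> ct2, 'k) bqop" where
  "tri P = (had_tau swp_ct (fst P), had_rel P sel_ct)"

record ('b, 'k, 'o) alg =
  carr :: "'b set"
  addA :: "'b \<Rightarrow> 'b \<Rightarrow> 'b"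
  zeroA :: 'b
  scaleA :: "'k \<Rightarrow> 'b \<Rightarrow> 'b"
  opA :: "('o \<Rightarrow> 'k) \<Rightarrow> 'b \<Rightarrow> 'b \<Rightarrow> 'b"

definition asum :: "('b, 'k, 'o) alg \<Rightarrow> ('i \<Rightarrow> 'b) \<Rightarrow> 'i set \<Rightarrow> 'b" where
  "asum A f I = foldr (\<lambda>i acc. addA A (f i) acc) (SOME xs. distinct xs \<and> set xs = I) (zeroA A)"

definition kvs :: "('b, 'k::field, 'o) alg \<Rightarrow> bool" where
  "kvs A \<longleftrightarrow> zeroA A \<in> carr A \<and>
     (\<forall>x\<in>carr A. \<forall>y\<in>carr A. addA A x y \<in> carr A) \<and>
     (\<forall>c. \<forall>x\<in>carr A. scaleA A c x \<in> carr A) \<and>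
     (\<forall>x\<in>carr A. \<forall>y\<in>carr A. \<forall>z\<in>carr A. addA A (addA A x y) z = addA A x (addA A y z)) \<and>
     (\<forall>x\<in>carr A. \<forall>y\<in>carr A. addA A x y = addA A y x) \<and>
     (\<forall>x\<in>carr A. addA A (zeroA A) x = x) \<and>
     (\<forall>x\<in>carr A. addA A x (scaleA A (-1) x) = zeroA A) \<and>
     (\<forall>x\<in>carr A. scaleA A 1 x = x) \<and>
     (\<forall>c d. \<forall>x\<in>carr A. scaleA A (c * d) x = scaleA A c (scaleA A d x)) \<and>
     (\<forall>c d. \<forall>x\<in>carr A. scaleA A (c + d) x = addA A (scaleA A c x) (scaleA A d x)) \<and>
     (\<forall>c. \<forall>x\<in>carr A. \<forall>y\<in>carr A. scaleA A c (addA A x y) = addA A (scaleA A c x) (scaleA A c y))"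

definition bvec :: "'o \<Rightarrow> 'o \<Rightarrow> 'k::field" where
  "bvec \<mu> = (\<lambda>\<nu>. if \<nu> = \<mu> then 1 else 0)"

definition tauV :: "('o::finite \<Rightarrow> 'o \<Rightarrow> 'k::field) \<Rightarrow> ('o \<Rightarrow> 'k) \<Rightarrow> ('o \<Rightarrow> 'k)" where
  "tauV tau v = (\<lambda>\<nu>'. \<Sum>\<nu>\<in>UNIV. v \<nu> * tau \<nu> \<nu>')"

definition eval3 :: "('b, 'k::field, 'o::finite) alg \<Rightarrow> ('o \<times> 'o \<times> v3 \<times> v3 \<times> v3 \<Rightarrow> 'k) \<Rightarrow> (v3 \<Rightarrow> 'b) \<Rightarrow> 'b" where
  "eval3 A r x = asum A (\<lambda>(\<mu>, \<nu>, a, b, c).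
      scaleA A (r (\<mu>, \<nu>, a, b, c)) (opA A (bvec \<mu>) (opA A (bvec \<nu>) (x a) (x b)) (x c))) UNIV"

definition is_alg :: "('o::finite, 'k::field) bqop \<Rightarrow> ('b, 'k, 'o) alg \<Rightarrow> bool" where
  "is_alg P A \<longleftrightarrow> kvs A \<and>
     (\<forall>v. \<forall>x\<in>carr A. \<forall>y\<in>carr A. opA A v x y \<in> carr A) \<and>
     (\<forall>v. \<forall>x\<in>carr A. \<forall>x'\<in>carr A. \<forall>y\<in>carr A.
         opA A v (addA A x x') y = addA A (opA A v x y) (opA A v x' y) \<and>
         opA A v y (addA A x x') = addA A (opA A v y x) (opA A v y x')) \<and>
     (\<forall>v c. \<forall>x\<in>carr A. \<forall>y\<in>carr A.
         opA A v (scaleA A c x) y = scaleA A c (opA A v x y) \<and>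
         opA A v x (scaleA A c y) = scaleA A c (opA A v x y)) \<and>
     (\<forall>v w. \<forall>x\<in>carr A. \<forall>y\<in>carr A.
         opA A (\<lambda>i. v i + w i) x y = addA A (opA A v x y) (opA A w x y)) \<and>
     (\<forall>v c. \<forall>x\<in>carr A. \<forall>y\<in>carr A. opA A (\<lambda>i. c * v i) x y = scaleA A c (opA A v x y)) \<and>
     (\<forall>v. \<forall>x\<in>carr A. \<forall>y\<in>carr A. opA A (tauV (fst P) v) x y = opA A v y x) \<and>
     (\<forall>r\<in>snd P. \<forall>x. (\<forall>i. x i \<in> carr A) \<longrightarrow> eval3 A r x = zeroA A)"

text \<open>a(z) = sum_s a(s) z^(-s-1) is represented by its coefficient function s :: int => a(s).\<close>
definition distr :: "('b, 'k, 'o) alg \<Rightarrow> (int \<Rightarrow> 'b) \<Rightarrow> bool" where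
  "distr A a \<longleftrightarrow> (\<forall>s. a s \<in> carr A)"

text \<open>Coefficient of w^(-m-1) z^(-n-1) in (w-z)^N a(w)*b(z).\<close>
definition loc_coef :: "('b, 'k::field, 'o) alg \<Rightarrow> ('o \<Rightarrow> 'k) \<Rightarrow> (int \<Rightarrow> 'b) \<Rightarrow> (int \<Rightarrow> 'b) \<Rightarrow> nat \<Rightarrow> int \<Rightarrow> int \<Rightarrow> 'b" where
  "loc_coef A v a b N m n = asum A (\<lambda>i. scaleA A (of_int ((-1) ^ i * int (N choose i)))
      (opA A v (a (m + int N - int i)) (b (n + int i)))) {0..N}"

definition local_op :: "('b, 'k::field, 'o) alg \<Rightarrow> ('o \<Rightarrow> 'k) \<Rightarrow> (int \<Rightarrow> 'b) \<Rightarrow> (int \<Rightarrow> 'b) \<Rightarrow> bool" where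
  "local_op A v a b \<longleftrightarrow> (\<exists>N. \<forall>m n. loc_coef A v a b N m n = zeroA A)"

definition local :: "('b, 'k::field, 'o) alg \<Rightarrow> (int \<Rightarrow> 'b) \<Rightarrow> (int \<Rightarrow> 'b) \<Rightarrow> bool" where
  "local A a b \<longleftrightarrow> (\<forall>v. local_op A v a b \<and> local_op A v b a)"

text \<open>(a *_(n) b)(w) = Res_xi (xi-w)^n a(xi)*b(w); coefficient of w^(-m-1).\<close>
definition nprod :: "('b, 'k::field, 'o) alg \<Rightarrow> ('o \<Rightarrow> 'k) \<Rightarrow> nat \<Rightarrow> (int \<Rightarrow> 'b) \<Rightarrow> (int \<Rightarrow> 'b) \<Rightarrow> (int \<Rightarrow> 'b)" where
  "nprod A v n a b = (\<lambda>m. asum A (\<lambda>i. scaleA A (of_int ((-1) ^ i * int (n choose i)))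
      (opA A v (a (int n - int i)) (b (m + int i)))) {0..n})"

definition dong_alg :: "('b, 'k::field, 'o) alg \<Rightarrow> bool" where
  "dong_alg A \<longleftrightarrow> (\<forall>a b c. distr A a \<and> distr A b \<and> distr A c \<and>
      local A a b \<and> local A b c \<and> local A a c \<longrightarrow>
      (\<forall>n v. local A (nprod A v n a b) c))"

text \<open>P is a Dong operad w.r.t. all P-algebras whose carrier lies in the type 'b.\<close>
definition dong_in :: "'b itself \<Rightarrow> ('o::finite, 'k::field) bqop \<Rightarrow> bool" where
  "dong_in _ P \<longleftrightarrow> (\<forall>A :: ('b, 'k, 'o) alg. is_alg P A \<longrightarrow> dong_alg A)"

end

theory Submission
  imports Defs
begin

locale kv =
  fixes A :: "('b, 'k::field, 'o) alg"
  assumes kvs: "kvs A"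
begin

abbreviation "C \<equiv> carr A"
abbreviation "pl \<equiv> addA A"
abbreviation "z0 \<equiv> zeroA A"
abbreviation "sc \<equiv> scaleA A"

lemma zero_C[simp]: "z0 \<in> C" using conjunct1[OF kvs[unfolded kvs_def]] by blast
lemma pl_C[simp]: "x \<in> C \<Longrightarrow> y \<in> C \<Longrightarrow> pl x y \<in> C" using conjunct1[OF conjunct2[OF kvs[unfolded kvs_def]]] by blast
lemma sc_C[simp]: "x \<in> C \<Longrightarrow> sc c x \<in> C" using conjunct1[OF conjunct2[OF conjunct2[OF kvs[unfolded kvs_def]]]] by blast
lemma pl_assoc: "x \<in> C \<Longrightarrow> y \<in> C \<Longrightarrow> w \<in> C \<Longrightarrow> pl (pl x y) w = pl x (pl y w)" using conjunct1[OF conjunct2[OF conjunct2[OF conjunct2[OF kvs[unfolded kvs_def]]]]] by blast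
lemma pl_comm: "x \<in> C \<Longrightarrow> y \<in> C \<Longrightarrow> pl x y = pl y x" using conjunct1[OF conjunct2[OF conjunct2[OF conjunct2[OF conjunct2[OF kvs[unfolded kvs_def]]]]]] by blast
lemma pl_lcomm: "x \<in> C \<Longrightarrow> y \<in> C \<Longrightarrow> w \<in> C \<Longrightarrow> pl x (pl y w) = pl y (pl x w)"
proof -
  assume a: "x \<in> C" "y \<in> C" "w \<in> C"
  have "pl x (pl y w) = pl (pl x y) w" using a by (simp add: pl_assoc)
  also have "\<dots> = pl (pl y x) w" using a by (simp add: pl_comm)
  finally show ?thesis using a by (simp add: pl_assoc)
qed
lemma pl_0l[simp]: "x \<in> C \<Longrightarrow> pl z0 x = x" using conjunct1[OF conjunct2[OF conjunct2[OF conjunct2[OF conjunct2[OF conjunct2[OF kvs[unfolded kvs_def]]]]]]] by blast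
lemma pl_0r[simp]: "x \<in> C \<Longrightarrow> pl x z0 = x" by (metis pl_0l pl_comm zero_C)
lemma pl_neg: "x \<in> C \<Longrightarrow> pl x (sc (-1) x) = z0" using conjunct1[OF conjunct2[OF conjunct2[OF conjunct2[OF conjunct2[OF conjunct2[OF conjunct2[OF kvs[unfolded kvs_def]]]]]]]] by blast
lemma sc_1[simp]: "x \<in> C \<Longrightarrow> sc 1 x = x" using conjunct1[OF conjunct2[OF conjunct2[OF conjunct2[OF conjunct2[OF conjunct2[OF conjunct2[OF conjunct2[OF kvs[unfolded kvs_def]]]]]]]]] by blast
lemma sc_mult: "x \<in> C \<Longrightarrow> sc (c * d) x = sc c (sc d x)" using conjunct1[OF conjunct2[OF conjunct2[OF conjunct2[OF conjunct2[OF conjunct2[OF conjunct2[OF conjunct2[OF conjunct2[OF kvs[unfolded kvs_def]]]]]]]]]] by blast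
lemma sc_add: "x \<in> C \<Longrightarrow> sc (c + d) x = pl (sc c x) (sc d x)" using conjunct1[OF conjunct2[OF conjunct2[OF conjunct2[OF conjunct2[OF conjunct2[OF conjunct2[OF conjunct2[OF conjunct2[OF conjunct2[OF kvs[unfolded kvs_def]]]]]]]]]]] by blast
lemma sc_pl: "x \<in> C \<Longrightarrow> y \<in> C \<Longrightarrow> sc c (pl x y) = pl (sc c x) (sc c y)" using conjunct2[OF conjunct2[OF conjunct2[OF conjunct2[OF conjunct2[OF conjunct2[OF conjunct2[OF conjunct2[OF conjunct2[OF conjunct2[OF kvs[unfolded kvs_def]]]]]]]]]]] by blast

lemma pl_cancel: assumes "x \<in> C" "y \<in> C" "w \<in> C" "pl x y = pl x w" shows "y = w"
proof -
  have "y = pl (pl (sc (-1) x) x) y" using assms by (simp add: pl_comm pl_neg)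
  also have "\<dots> = pl (sc (-1) x) (pl x y)" using assms by (simp add: pl_assoc)
  also have "\<dots> = pl (pl (sc (-1) x) x) w" using assms by (simp add: pl_assoc)
  also have "\<dots> = w" using assms by (simp add: pl_comm pl_neg)
  finally show ?thesis .
qed

lemma sc_0[simp]: "x \<in> C \<Longrightarrow> sc 0 x = z0"
  using sc_add[of x 0 0] pl_cancel[of "sc 0 x" "sc 0 x" z0] by simp

lemma sc_z0[simp]: "sc c z0 = z0"
  using sc_pl[of z0 z0 c] pl_cancel[of "sc c z0" "sc c z0" z0] by simp

lemma pl_negI: "x \<in> C \<Longrightarrow> y \<in> C \<Longrightarrow> pl x y = z0 \<Longrightarrow> y = sc (-1) x"
  using pl_cancel[of x y "sc (-1) x"] pl_neg by simp

lemma neg_neg: "x \<in> C \<Longrightarrow> sc (-1) (sc (-1) x) = x"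
  by (simp flip: sc_mult)

lemma sub_self_iff: assumes "x \<in> C" "y \<in> C" shows "pl x (sc (-1) y) = z0 \<longleftrightarrow> x = y"
proof
  assume "pl x (sc (-1) y) = z0"
  then have "sc (-1) y = sc (-1) x" using pl_negI assms by simp
  then show "x = y" using neg_neg assms by metis
qed (simp add: pl_neg assms)

definition lsum :: "('i \<Rightarrow> 'b) \<Rightarrow> 'i list \<Rightarrow> 'b" where
  "lsum f xs = foldr (\<lambda>i acc. pl (f i) acc) xs z0"

lemma lsum_Nil[simp]: "lsum f [] = z0" by (simp add: lsum_def)
lemma lsum_Cons[simp]: "lsum f (x # xs) = pl (f x) (lsum f xs)" by (simp add: lsum_def)
lemma lsum_C[simp]: "\<forall>i\<in>set xs. f i \<in> C \<Longrightarrow> lsum f xs \<in> C"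
  by (induction xs) auto

lemma lsum_move: "\<forall>i\<in>set (ys1 @ x # ys2). f i \<in> C \<Longrightarrow>
   lsum f (ys1 @ x # ys2) = pl (f x) (lsum f (ys1 @ ys2))"
proof (induction ys1)
  case (Cons a ys1)
  have "lsum f (ys1 @ ys2) \<in> C" using Cons.prems by (intro lsum_C) auto
  then show ?case using Cons by (simp add: pl_lcomm[of "f a" "f x"])
qed simp

lemma lsum_perm: "distinct xs \<Longrightarrow> distinct ys \<Longrightarrow> set xs = set ys \<Longrightarrow> \<forall>i\<in>set xs. f i \<in> C
   \<Longrightarrow> lsum f xs = lsum f ys"
proof (induction xs arbitrary: ys)
  case Nil then show ?case by simp
next
  case (Cons x xs)
  then have "x \<in> set ys" by auto
  then obtain ys1 ys2 where ys: "ys = ys1 @ x # ys2" by (meson split_list)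
  have e1: "set xs = set ys - {x}" using Cons.prems by auto
  have e2: "set (ys1 @ ys2) = set ys - {x}" using ys Cons.prems(2) by auto
  have "set xs = set (ys1 @ ys2)" using e1 e2 by simp
  then have "lsum f xs = lsum f (ys1 @ ys2)"
    using Cons.prems ys by (intro Cons.IH) auto
  then show ?case using ys Cons.prems lsum_move[of ys1 x ys2 f] by simp
qed

lemma asum_lsum: "finite I \<Longrightarrow> distinct xs \<Longrightarrow> set xs = I \<Longrightarrow> \<forall>i\<in>I. f i \<in> C
   \<Longrightarrow> asum A f I = lsum f xs"
proof -
  assume a: "finite I" "distinct xs" "set xs = I" "\<forall>i\<in>I. f i \<in> C"
  have "\<exists>ys. distinct ys \<and> set ys = I" using a(1) finite_distinct_list by blast
  then have s: "distinct (SOME ys. distinct ys \<and> set ys = I) \<and> set (SOME ys. distinct ys \<and> set ys = I) = I"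
    by (rule someI_ex)
  show ?thesis unfolding asum_def lsum_def[symmetric]
    using s a by (intro lsum_perm) auto
qed

lemma asum_empty[simp]: "asum A f {} = z0"
  using asum_lsum[of "{}" "[]" f] by simp

lemma asum_insert: "finite I \<Longrightarrow> i \<notin> I \<Longrightarrow> f i \<in> C \<Longrightarrow> \<forall>j\<in>I. f j \<in> C \<Longrightarrow>
  asum A f (insert i I) = pl (f i) (asum A f I)"
proof -
  assume a: "finite I" "i \<notin> I" "f i \<in> C" "\<forall>j\<in>I. f j \<in> C"
  obtain xs where xs: "distinct xs" "set xs = I" using a(1) finite_distinct_list by blast
  have "asum A f (insert i I) = lsum f (i # xs)" using a xs by (intro asum_lsum) auto
  moreover have "asum A f I = lsum f xs" using a xs by (intro asum_lsum) auto
  ultimately show ?thesis by simp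
qed

lemma asum_C[simp]: "finite I \<Longrightarrow> \<forall>i\<in>I. f i \<in> C \<Longrightarrow> asum A f I \<in> C"
proof -
  assume a: "finite I" "\<forall>i\<in>I. f i \<in> C"
  obtain xs where xs: "distinct xs" "set xs = I" using a(1) finite_distinct_list by blast
  show ?thesis using asum_lsum[OF a(1) xs] a xs lsum_C[of xs f] by simp
qed

end

lemma asum_hom:
  assumes "finite I" "kv A" "\<forall>i\<in>I. f i \<in> carr A"
    "\<And>x y. x \<in> carr A \<Longrightarrow> y \<in> carr A \<Longrightarrow> h (addA A x y) = addA B (h x) (h y)"
    "h (zeroA A) = zeroA B"
  shows "h (asum A f I) = asum B (\<lambda>i. h (f i)) I"
proof -
  interpret kv A by fact
  define xs where "xs = (SOME xs. distinct xs \<and> set xs = I)"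
  have "\<exists>ys. distinct ys \<and> set ys = I" using assms(1) finite_distinct_list by blast
  then have s: "set xs = I" unfolding xs_def by (rule someI2_ex) auto
  have "set ys \<subseteq> I \<Longrightarrow> h (foldr (\<lambda>i acc. addA A (f i) acc) ys (zeroA A)) =
      foldr (\<lambda>i acc. addA B (h (f i)) acc) ys (zeroA B)" for ys
  proof (induction ys)
    case (Cons y ys)
    have "foldr (\<lambda>i acc. addA A (f i) acc) ys (zeroA A) = lsum f ys" by (simp add: lsum_def)
    moreover have "lsum f ys \<in> C" using Cons.prems assms(3) by (intro lsum_C) auto
    ultimately show ?case using Cons assms by simp
  qed (simp add: assms)
  then show ?thesis unfolding asum_def xs_def[symmetric] using s by simp
qed

context kv
begin

abbreviation mi :: "'b \<Rightarrow> 'b \<Rightarrow> 'b" where "mi x y \<equiv> pl x (sc (-1) y)"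

lemma asum_cong: "finite I \<Longrightarrow> (\<And>i. i \<in> I \<Longrightarrow> f i = g i) \<Longrightarrow> asum A f I = asum A g I"
proof -
  assume a: "finite I" "\<And>i. i \<in> I \<Longrightarrow> f i = g i"
  define xs where "xs = (SOME xs. distinct xs \<and> set xs = I)"
  have "\<exists>ys. distinct ys \<and> set ys = I" using a(1) finite_distinct_list by blast
  then have s: "set xs = I" unfolding xs_def by (rule someI2_ex) auto
  have "set ys \<subseteq> I \<Longrightarrow> foldr (\<lambda>i acc. pl (f i) acc) ys z0 = foldr (\<lambda>i acc. pl (g i) acc) ys z0" for ys
    using a(2) by (induction ys) auto
  then show ?thesis unfolding asum_def xs_def[symmetric] using s by simp
qed


lemma asum_zero: "finite I \<Longrightarrow> asum A (\<lambda>i. z0) I = z0"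
  by (induction I rule: finite_induct) (auto simp: asum_insert)

lemma asum_zero': "finite I \<Longrightarrow> (\<And>i. i \<in> I \<Longrightarrow> f i = z0) \<Longrightarrow> asum A f I = z0"
  using asum_cong[of I f "\<lambda>i. z0"] asum_zero by simp

lemma pl4: "a \<in> C \<Longrightarrow> b \<in> C \<Longrightarrow> c \<in> C \<Longrightarrow> d \<in> C \<Longrightarrow> pl (pl a b) (pl c d) = pl (pl a c) (pl b d)"
  by (simp add: pl_assoc pl_lcomm[of b c])

lemma asum_add: "finite I \<Longrightarrow> (\<forall>i\<in>I. f i \<in> C) \<Longrightarrow> (\<forall>i\<in>I. g i \<in> C) \<Longrightarrow>
  asum A (\<lambda>i. pl (f i) (g i)) I = pl (asum A f I) (asum A g I)"
  by (induction I rule: finite_induct) (auto simp: asum_insert pl4)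

lemma asum_sc: "finite I \<Longrightarrow> (\<forall>i\<in>I. f i \<in> C) \<Longrightarrow>
  asum A (\<lambda>i. sc c (f i)) I = sc c (asum A f I)"
  by (induction I rule: finite_induct) (auto simp: asum_insert sc_pl)

lemma asum_sc_left: "finite I \<Longrightarrow> x \<in> C \<Longrightarrow>
  asum A (\<lambda>i. sc (c i) x) I = sc (\<Sum>i\<in>I. c i) x"
  by (induction I rule: finite_induct) (auto simp: asum_insert sc_add)

lemma asum_Un: "finite I \<Longrightarrow> finite J \<Longrightarrow> I \<inter> J = {} \<Longrightarrow> \<forall>i\<in>I. f i \<in> C \<Longrightarrow> \<forall>i\<in>J. f i \<in> C \<Longrightarrow>
  asum A f (I \<union> J) = pl (asum A f I) (asum A f J)"
proof (induction I rule: finite_induct)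
  case (insert x F)
  have "asum A f (insert x (F \<union> J)) = pl (f x) (asum A f (F \<union> J))"
    using insert by (intro asum_insert) auto
  then show ?case using insert by (simp add: asum_insert pl_assoc)
qed simp

lemma asum_reindex: "finite I \<Longrightarrow> inj_on g I \<Longrightarrow> (\<forall>i\<in>I. f (g i) \<in> C) \<Longrightarrow>
  asum A f (g ` I) = asum A (\<lambda>i. f (g i)) I"
  by (induction I rule: finite_induct) (auto simp: asum_insert)

lemma asum_support: "finite I \<Longrightarrow> S \<subseteq> I \<Longrightarrow> (\<forall>i\<in>I. f i \<in> C) \<Longrightarrow> (\<And>i. i \<in> I - S \<Longrightarrow> f i = z0) \<Longrightarrow>
  asum A f I = asum A f S"
proof -
  assume a: "finite I" "S \<subseteq> I" "\<forall>i\<in>I. f i \<in> C" "\<And>i. i \<in> I - S \<Longrightarrow> f i = z0"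
  have "I = S \<union> (I - S)" using a by auto
  moreover have "finite S" using a finite_subset by blast
  ultimately have "asum A f I = pl (asum A f S) (asum A f (I - S))"
    using a asum_Un[of S "I - S" f] by auto
  moreover have "asum A f (I - S) = z0" using a by (intro asum_zero') auto
  moreover have "asum A f S \<in> C" using a by (intro asum_C) (auto intro: finite_subset)
  ultimately show ?thesis by simp
qed

lemma asum_swap: "finite I \<Longrightarrow> finite J \<Longrightarrow> \<forall>i\<in>I. \<forall>j\<in>J. f i j \<in> C \<Longrightarrow>
  asum A (\<lambda>i. asum A (\<lambda>j. f i j) J) I = asum A (\<lambda>j. asum A (\<lambda>i. f i j) I) J"
proof (induction I rule: finite_induct)
  case empty then show ?case by (simp add: asum_zero)
next
  case (insert x F)
  have "asum A (\<lambda>i. asum A (\<lambda>j. f i j) J) (insert x F) = pl (asum A (\<lambda>j. f x j) J) (asum A (\<lambda>i. asum A (\<lambda>j. f i j) J) F)"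
    using insert by (intro asum_insert) auto
  also have "\<dots> = pl (asum A (\<lambda>j. f x j) J) (asum A (\<lambda>j. asum A (\<lambda>i. f i j) F) J)" using insert by simp
  also have "\<dots> = asum A (\<lambda>j. pl (f x j) (asum A (\<lambda>i. f i j) F)) J"
    using insert by (intro asum_add[symmetric]) auto
  also have "\<dots> = asum A (\<lambda>j. asum A (\<lambda>i. f i j) (insert x F)) J"
    using insert by (intro asum_cong) (auto simp: asum_insert)
  finally show ?case .
qed

lemma asum_Sigma: "finite I \<Longrightarrow> (\<And>i. i \<in> I \<Longrightarrow> finite (J i)) \<Longrightarrow> (\<forall>p\<in>Sigma I J. f p \<in> C) \<Longrightarrow>
  asum A f (Sigma I J) = asum A (\<lambda>i. asum A (\<lambda>j. f (i, j)) (J i)) I"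
proof (induction I rule: finite_induct)
  case empty then show ?case by simp
next
  case (insert x F)
  have e: "Sigma (insert x F) J = Pair x ` J x \<union> Sigma F J" by auto
  have "asum A f (Sigma (insert x F) J) = pl (asum A f (Pair x ` J x)) (asum A f (Sigma F J))"
    unfolding e using insert by (intro asum_Un) auto
  also have "asum A f (Pair x ` J x) = asum A (\<lambda>j. f (x, j)) (J x)"
    using insert by (intro asum_reindex) (auto simp: inj_on_def)
  finally show ?case using insert by (simp add: asum_insert)
qed

lemma asum_singleton[simp]: "f i \<in> C \<Longrightarrow> asum A f {i} = f i"
  using asum_insert[of "{}" i f] by simp

lemma asum_mi: "finite I \<Longrightarrow> (\<forall>i\<in>I. f i \<in> C) \<Longrightarrow> (\<forall>i\<in>I. g i \<in> C) \<Longrightarrow>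
  asum A (\<lambda>i. mi (f i) (g i)) I = mi (asum A f I) (asum A g I)"
  by (simp add: asum_add asum_sc)

lemma mi_C[simp]: "x \<in> C \<Longrightarrow> y \<in> C \<Longrightarrow> mi x y \<in> C" by simp

lemma sc_mi: "x \<in> C \<Longrightarrow> y \<in> C \<Longrightarrow> sc c (mi x y) = mi (sc c x) (sc c y)"
  by (simp add: sc_pl flip: sc_mult)

lemma mi_pl: "a \<in> C \<Longrightarrow> b \<in> C \<Longrightarrow> c \<in> C \<Longrightarrow> d \<in> C \<Longrightarrow> mi (pl a b) (pl c d) = pl (mi a c) (mi b d)"
  by (simp add: sc_pl pl4)

lemma mi_self[simp]: "x \<in> C \<Longrightarrow> mi x x = z0" by (simp add: pl_neg)

lemma mi_z0[simp]: "x \<in> C \<Longrightarrow> mi x z0 = x" by simp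

lemma mi_trans: "a \<in> C \<Longrightarrow> b \<in> C \<Longrightarrow> c \<in> C \<Longrightarrow> pl (mi a b) (mi b c) = mi a c"
proof -
  assume x: "a \<in> C" "b \<in> C" "c \<in> C"
  have "pl (mi a b) (mi b c) = pl a (pl (pl (sc (-1) b) b) (sc (-1) c))"
    using x by (simp add: pl_assoc)
  also have "pl (sc (-1) b) b = z0" using x by (simp add: pl_comm pl_neg)
  finally show ?thesis using x by simp
qed

lemma mi_swap: "a \<in> C \<Longrightarrow> b \<in> C \<Longrightarrow> mi b a = sc (-1) (mi a b)"
  by (simp add: sc_pl pl_comm flip: sc_mult)

lemma mi_eq_z0: "a \<in> C \<Longrightarrow> b \<in> C \<Longrightarrow> mi a b = z0 \<longleftrightarrow> a = b"
  using sub_self_iff by simp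

lemma pl_mi_cancel: "a \<in> C \<Longrightarrow> b \<in> C \<Longrightarrow> pl b (mi a b) = a"
proof -
  assume x: "a \<in> C" "b \<in> C"
  have "pl b (mi a b) = pl a (pl b (sc (-1) b))" using x by (simp add: pl_lcomm)
  then show ?thesis using x by (simp add: pl_neg)
qed

end

locale balg = kv A for A :: "('b, 'k::field, 'j::finite) alg" +
  assumes op_C: "\<And>v x y. x \<in> carr A \<Longrightarrow> y \<in> carr A \<Longrightarrow> opA A v x y \<in> carr A"
    and op_addl: "\<And>v x x' y. x \<in> carr A \<Longrightarrow> x' \<in> carr A \<Longrightarrow> y \<in> carr A \<Longrightarrow>
        opA A v (addA A x x') y = addA A (opA A v x y) (opA A v x' y)"
    and op_addr: "\<And>v x x' y. x \<in> carr A \<Longrightarrow> x' \<in> carr A \<Longrightarrow> y \<in> carr A \<Longrightarrow>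
        opA A v y (addA A x x') = addA A (opA A v y x) (opA A v y x')"
    and op_scl: "\<And>v c x y. x \<in> carr A \<Longrightarrow> y \<in> carr A \<Longrightarrow> opA A v (scaleA A c x) y = scaleA A c (opA A v x y)"
    and op_scr: "\<And>v c x y. x \<in> carr A \<Longrightarrow> y \<in> carr A \<Longrightarrow> opA A v x (scaleA A c y) = scaleA A c (opA A v x y)"
    and op_vadd: "\<And>v w x y. x \<in> carr A \<Longrightarrow> y \<in> carr A \<Longrightarrow>
        opA A (\<lambda>i. v i + w i) x y = addA A (opA A v x y) (opA A w x y)"
    and op_vsc: "\<And>v c x y. x \<in> carr A \<Longrightarrow> y \<in> carr A \<Longrightarrow> opA A (\<lambda>i. c * v i) x y = scaleA A c (opA A v x y)"

lemma is_alg_balg: "is_alg P A \<Longrightarrow> balg A"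
proof -
  assume h: "is_alg P A"
  show ?thesis unfolding balg_def balg_axioms_def kv_def
  proof (intro conjI allI impI)
  qed (use h in \<open>simp_all add: is_alg_def\<close>)
qed

context balg
begin

abbreviation "op \<equiv> opA A"

lemmas [simp] = op_C

lemma op_z0l[simp]: "y \<in> C \<Longrightarrow> op v z0 y = z0"
  using op_addl[of z0 z0 y v] pl_cancel[of "op v z0 y" "op v z0 y" z0] by simp

lemma op_z0r[simp]: "y \<in> C \<Longrightarrow> op v y z0 = z0"
  using op_addr[of z0 z0 y v] pl_cancel[of "op v y z0" "op v y z0" z0] by simp

lemma op_vzero[simp]: "x \<in> C \<Longrightarrow> y \<in> C \<Longrightarrow> op (\<lambda>i. 0) x y = z0"
  using op_vsc[of x y 0 "\<lambda>i. 0"] by simp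

lemma op_mil: "x \<in> C \<Longrightarrow> x' \<in> C \<Longrightarrow> y \<in> C \<Longrightarrow> op v (mi x x') y = mi (op v x y) (op v x' y)"
  by (simp add: op_addl op_scl)

lemma op_mir: "x \<in> C \<Longrightarrow> x' \<in> C \<Longrightarrow> y \<in> C \<Longrightarrow> op v y (mi x x') = mi (op v y x) (op v y x')"
  by (simp add: op_addr op_scr)

lemma op_asum_l: "finite I \<Longrightarrow> \<forall>i\<in>I. f i \<in> C \<Longrightarrow> y \<in> C \<Longrightarrow>
   op v (asum A f I) y = asum A (\<lambda>i. op v (f i) y) I"
  using asum_hom[of I A f "\<lambda>x. op v x y" A] kv_axioms by (simp add: op_addl)

lemma op_asum_r: "finite I \<Longrightarrow> \<forall>i\<in>I. f i \<in> C \<Longrightarrow> y \<in> C \<Longrightarrow>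
   op v y (asum A f I) = asum A (\<lambda>i. op v y (f i)) I"
  using asum_hom[of I A f "\<lambda>x. op v y x" A] kv_axioms by (simp add: op_addr)

lemma op_vsum: "finite J \<Longrightarrow> x \<in> C \<Longrightarrow> y \<in> C \<Longrightarrow>
   op (\<lambda>i. \<Sum>j\<in>J. F j i) x y = asum A (\<lambda>j. op (F j) x y) J"
proof (induction J rule: finite_induct)
  case empty then show ?case by simp
next
  case (insert a J)
  have "op (\<lambda>i. \<Sum>j\<in>insert a J. F j i) x y = op (\<lambda>i. F a i + (\<Sum>j\<in>J. F j i)) x y"
    using insert by simp
  also have "\<dots> = pl (op (F a) x y) (op (\<lambda>i. \<Sum>j\<in>J. F j i) x y)"
    using insert by (intro op_vadd)
  finally show ?case using insert by (simp add: asum_insert)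
qed

lemma op_expand: "x \<in> C \<Longrightarrow> y \<in> C \<Longrightarrow> op V x y = asum A (\<lambda>j. sc (V j) (op (bvec j) x y)) UNIV"
proof -
  assume xy: "x \<in> C" "y \<in> C"
  have "V = (\<lambda>i. \<Sum>j\<in>UNIV. (\<lambda>j i. V j * bvec j i) j i)"
    by (auto simp: bvec_def if_distrib cong: if_cong)
  then have "op V x y = op (\<lambda>i. \<Sum>j\<in>UNIV. (\<lambda>j i. V j * bvec j i) j i) x y" by simp
  also have "\<dots> = asum A (\<lambda>j. op (\<lambda>i. V j * bvec j i) x y) UNIV"
    using xy by (intro op_vsum) auto
  also have "\<dots> = asum A (\<lambda>j. sc (V j) (op (bvec j) x y)) UNIV"
    using xy by (intro asum_cong) (auto simp: op_vsc)
  finally show ?thesis .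
qed

definition cf :: "nat \<Rightarrow> nat \<Rightarrow> 'k" where "cf N i = of_int ((-1) ^ i * int (N choose i))"

lemma loc_coef_cf: "loc_coef A v a b N m n = asum A (\<lambda>i. sc (cf N i) (op v (a (m + int N - int i)) (b (n + int i)))) {0..N}"
  by (simp add: loc_coef_def cf_def)

lemma nprod_cf: "nprod A v N a b m = asum A (\<lambda>i. sc (cf N i) (op v (a (int N - int i)) (b (m + int i)))) {0..N}"
  by (simp add: nprod_def cf_def)

lemma sc_mi_same: "x \<in> C \<Longrightarrow> mi (sc c x) (sc d x) = sc (c - d) x"
proof -
  assume x: "x \<in> C"
  have "sc (c - d) x = sc (c + (-1) * d) x" by simp
  also have "\<dots> = mi (sc c x) (sc d x)" using x by (simp only: sc_add sc_mult)
  finally show ?thesis by simp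
qed

lemma cf_Suc: "cf (Suc N) j = cf N j - (if j = 0 then 0 else cf N (j - 1))"
proof (cases j)
  case 0 then show ?thesis by (simp add: cf_def)
next
  case (Suc i)
  have "cf (Suc N) j = of_int ((-1) ^ j * int (N choose j)) + of_int ((-1) ^ j * int (N choose i))"
    unfolding cf_def using Suc by (simp add: algebra_simps)
  also have "of_int ((-1) ^ j * int (N choose i)) = - (cf N i :: 'k)"
    unfolding cf_def using Suc by simp
  finally show ?thesis using Suc by (simp add: cf_def)
qed

lemma cf_big: "N < j \<Longrightarrow> cf N j = 0" by (simp add: cf_def binomial_eq_0)

lemma loc_Suc:
  assumes a: "distr A a" and b: "distr A b"
  shows "loc_coef A v a b (Suc N) m n = mi (loc_coef A v a b N (m + 1) n) (loc_coef A v a b N m (n + 1))"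
proof -
  define T where "T j = op v (a (m + int (Suc N) - int j)) (b (n + int j))" for j
  have TC: "T j \<in> C" for j using a b by (simp add: T_def distr_def)
  have e1: "loc_coef A v a b N (m + 1) n = asum A (\<lambda>j. sc (cf N j) (T j)) {0..Suc N}"
  proof -
    have "loc_coef A v a b N (m + 1) n = asum A (\<lambda>j. sc (cf N j) (T j)) {0..N}"
      unfolding loc_coef_cf T_def by (intro asum_cong) (auto simp: algebra_simps)
    also have "\<dots> = asum A (\<lambda>j. sc (cf N j) (T j)) {0..Suc N}"
      using TC by (intro asum_support[symmetric]) (auto simp: cf_big)
    finally show ?thesis .
  qed
  have e2: "loc_coef A v a b N m (n + 1) = asum A (\<lambda>j. sc (if j = 0 then 0 else cf N (j - 1)) (T j)) {0..Suc N}"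
  proof -
    have "loc_coef A v a b N m (n + 1) = asum A (\<lambda>i. sc (cf N i) (T (Suc i))) {0..N}"
      unfolding loc_coef_cf T_def by (intro asum_cong) (auto simp: algebra_simps)
    also have "\<dots> = asum A (\<lambda>j. sc (if j = 0 then 0 else cf N (j - 1)) (T j)) (Suc ` {0..N})"
      using TC by (subst asum_reindex) auto
    also have "\<dots> = asum A (\<lambda>j. sc (if j = 0 then 0 else cf N (j - 1)) (T j)) {0..Suc N}"
    proof (intro asum_support[symmetric])
      fix i assume "i \<in> {0..Suc N} - Suc ` {0..N}"
      then have "i = 0" by (cases i) auto
      then show "sc (if i = 0 then 0 else cf N (i - 1)) (T i) = z0" using TC by simp
    qed (use TC in auto)
    finally show ?thesis .
  qed
  have "mi (loc_coef A v a b N (m + 1) n) (loc_coef A v a b N m (n + 1)) =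
     asum A (\<lambda>j. mi (sc (cf N j) (T j)) (sc (if j = 0 then 0 else cf N (j - 1)) (T j))) {0..Suc N}"
    unfolding e1 e2 using TC by (intro asum_mi[symmetric]) auto
  also have "\<dots> = asum A (\<lambda>j. sc (cf (Suc N) j) (T j)) {0..Suc N}"
    using TC by (intro asum_cong) (auto simp: sc_mi_same cf_Suc)
  also have "\<dots> = loc_coef A v a b (Suc N) m n"
    unfolding loc_coef_cf T_def by simp
  finally show ?thesis by simp
qed

lemma loc_mono:
  assumes "distr A a" "distr A b" "\<forall>m n. loc_coef A v a b N m n = z0"
  shows "\<forall>m n. loc_coef A v a b (N + k) m n = z0"
proof (induction k)
  case 0 then show ?case using assms by simp
next
  case (Suc k) then show ?case using loc_Suc[OF assms(1,2), of v "N + k"] by simp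
qed

lemma local_opE: "local_op A v a b \<Longrightarrow> distr A a \<Longrightarrow> distr A b \<Longrightarrow> \<exists>N. \<forall>N'\<ge>N. \<forall>m n. loc_coef A v a b N' m n = z0"
  unfolding local_op_def using loc_mono by (metis le_Suc_ex)

lemma loc_coef_C: "distr A a \<Longrightarrow> distr A b \<Longrightarrow> loc_coef A v a b N m n \<in> C"
  unfolding loc_coef_cf distr_def by simp

lemma nprod_C: "distr A a \<Longrightarrow> distr A b \<Longrightarrow> distr A (nprod A v N a b)"
  unfolding distr_def nprod_cf by simp

lemma loc_vadd: "distr A a \<Longrightarrow> distr A b \<Longrightarrow>
   loc_coef A (\<lambda>i. v i + w i) a b N m n = pl (loc_coef A v a b N m n) (loc_coef A w a b N m n)"
  unfolding loc_coef_cf distr_def by (simp add: op_vadd sc_pl asum_add[symmetric])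

lemma loc_ladd: "distr A a1 \<Longrightarrow> distr A a2 \<Longrightarrow> distr A b \<Longrightarrow>
   loc_coef A v (\<lambda>s. pl (a1 s) (a2 s)) b N m n = pl (loc_coef A v a1 b N m n) (loc_coef A v a2 b N m n)"
  unfolding loc_coef_cf distr_def by (simp add: op_addl sc_pl asum_add[symmetric])

lemma loc_radd: "distr A a \<Longrightarrow> distr A b1 \<Longrightarrow> distr A b2 \<Longrightarrow>
   loc_coef A v a (\<lambda>s. pl (b1 s) (b2 s)) N m n = pl (loc_coef A v a b1 N m n) (loc_coef A v a b2 N m n)"
  unfolding loc_coef_cf distr_def by (simp add: op_addr sc_pl asum_add[symmetric])

lemma loc_vzero: "distr A a \<Longrightarrow> distr A b \<Longrightarrow> loc_coef A (\<lambda>i. 0) a b N m n = z0"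
  unfolding loc_coef_cf distr_def by (simp add: asum_zero)

lemma loc_lzero: "distr A b \<Longrightarrow> loc_coef A v (\<lambda>s. z0) b N m n = z0"
  unfolding loc_coef_cf distr_def by (simp add: asum_zero)

lemma loc_rzero: "distr A a \<Longrightarrow> loc_coef A v a (\<lambda>s. z0) N m n = z0"
  unfolding loc_coef_cf distr_def by (simp add: asum_zero)

lemma distr_pl: "distr A a \<Longrightarrow> distr A b \<Longrightarrow> distr A (\<lambda>s. pl (a s) (b s))"
  by (simp add: distr_def)

lemma distr_z0: "distr A (\<lambda>s. z0)" by (simp add: distr_def)

lemma distr_asum: "finite J \<Longrightarrow> \<forall>j\<in>J. distr A (d j) \<Longrightarrow> distr A (\<lambda>s. asum A (\<lambda>j. d j s) J)"
  by (simp add: distr_def)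

lemma local_vsum:
  assumes "finite J" "distr A a" "distr A b" "\<forall>j\<in>J. local_op A (V j) a b"
  shows "local_op A (\<lambda>i. \<Sum>j\<in>J. V j i) a b"
  using assms(1,4)
proof (induction J rule: finite_induct)
  case empty then show ?case using assms loc_vzero by (simp add: local_op_def)
next
  case (insert x F)
  obtain N1 where N1: "\<forall>N'\<ge>N1. \<forall>m n. loc_coef A (V x) a b N' m n = z0"
    using local_opE insert assms by blast
  obtain N2 where N2: "\<forall>N'\<ge>N2. \<forall>m n. loc_coef A (\<lambda>i. \<Sum>j\<in>F. V j i) a b N' m n = z0"
    using local_opE insert assms by blast
  have "loc_coef A (\<lambda>i. \<Sum>j\<in>insert x F. V j i) a b (N1 + N2) m n = z0" for m n
    using insert N1 N2 assms loc_vadd[of a b "V x" "\<lambda>i. \<Sum>j\<in>F. V j i"] by simp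
  then show ?case unfolding local_op_def by blast
qed

lemma local_lsum:
  assumes "finite J" "distr A c" "\<forall>j\<in>J. distr A (d j) \<and> local_op A v (d j) c"
  shows "local_op A v (\<lambda>s. asum A (\<lambda>j. d j s) J) c"
  using assms(1,3)
proof (induction J rule: finite_induct)
  case empty then show ?case using assms loc_lzero by (simp add: local_op_def)
next
  case (insert x F)
  have dF: "distr A (\<lambda>s. asum A (\<lambda>j. d j s) F)" using insert by (intro distr_asum) auto
  obtain N1 where N1: "\<forall>N'\<ge>N1. \<forall>m n. loc_coef A v (d x) c N' m n = z0"
    using local_opE insert assms by blast
  obtain N2 where N2: "\<forall>N'\<ge>N2. \<forall>m n. loc_coef A v (\<lambda>s. asum A (\<lambda>j. d j s) F) c N' m n = z0"
    using local_opE insert assms dF by blast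
  have e: "(\<lambda>s. asum A (\<lambda>j. d j s) (insert x F)) = (\<lambda>s. pl (d x s) (asum A (\<lambda>j. d j s) F))"
    using insert by (auto simp: asum_insert distr_def)
  have "loc_coef A v (\<lambda>s. asum A (\<lambda>j. d j s) (insert x F)) c (N1 + N2) m n = z0" for m n
    unfolding e using insert N1 N2 assms dF loc_ladd[of "d x" "\<lambda>s. asum A (\<lambda>j. d j s) F" c] by simp
  then show ?case unfolding local_op_def by blast
qed

lemma local_rsum:
  assumes "finite J" "distr A c" "\<forall>j\<in>J. distr A (d j) \<and> local_op A v c (d j)"
  shows "local_op A v c (\<lambda>s. asum A (\<lambda>j. d j s) J)"
  using assms(1,3)
proof (induction J rule: finite_induct)
  case empty then show ?case using assms loc_rzero by (simp add: local_op_def)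
next
  case (insert x F)
  have dF: "distr A (\<lambda>s. asum A (\<lambda>j. d j s) F)" using insert by (intro distr_asum) auto
  obtain N1 where N1: "\<forall>N'\<ge>N1. \<forall>m n. loc_coef A v c (d x) N' m n = z0"
    using local_opE insert assms by blast
  obtain N2 where N2: "\<forall>N'\<ge>N2. \<forall>m n. loc_coef A v c (\<lambda>s. asum A (\<lambda>j. d j s) F) N' m n = z0"
    using local_opE insert assms dF by blast
  have e: "(\<lambda>s. asum A (\<lambda>j. d j s) (insert x F)) = (\<lambda>s. pl (d x s) (asum A (\<lambda>j. d j s) F))"
    using insert by (auto simp: asum_insert distr_def)
  have "loc_coef A v c (\<lambda>s. asum A (\<lambda>j. d j s) (insert x F)) (N1 + N2) m n = z0" for m n
    unfolding e using insert N1 N2 assms dF loc_radd[of c "d x" "\<lambda>s. asum A (\<lambda>j. d j s) F"] by simp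
  then show ?case unfolding local_op_def by blast
qed

lemma nprod_vsum: "finite J \<Longrightarrow> distr A a \<Longrightarrow> distr A b \<Longrightarrow>
  nprod A (\<lambda>i. \<Sum>j\<in>J. V j i) n a b = (\<lambda>s. asum A (\<lambda>j. nprod A (V j) n a b s) J)"
proof
  fix s
  assume J: "finite J" and d: "distr A a" "distr A b"
  have "nprod A (\<lambda>i. \<Sum>j\<in>J. V j i) n a b s =
     asum A (\<lambda>i. sc (cf n i) (asum A (\<lambda>j. op (V j) (a (int n - int i)) (b (s + int i))) J)) {0..n}"
    unfolding nprod_cf using J d by (intro asum_cong) (auto simp: op_vsum distr_def)
  also have "\<dots> = asum A (\<lambda>i. asum A (\<lambda>j. sc (cf n i) (op (V j) (a (int n - int i)) (b (s + int i)))) J) {0..n}"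
    using J d by (intro asum_cong) (auto simp: asum_sc distr_def)
  also have "\<dots> = asum A (\<lambda>j. asum A (\<lambda>i. sc (cf n i) (op (V j) (a (int n - int i)) (b (s + int i)))) {0..n}) J"
    using J d by (intro asum_swap) (auto simp: distr_def)
  also have "\<dots> = asum A (\<lambda>j. nprod A (V j) n a b s) J"
    unfolding nprod_cf by simp
  finally show "nprod A (\<lambda>i. \<Sum>j\<in>J. V j i) n a b s = asum A (\<lambda>j. nprod A (V j) n a b s) J" .
qed

end

lemma is_alg_rel: "is_alg P B \<Longrightarrow> r \<in> snd P \<Longrightarrow> \<forall>i. x i \<in> carr B \<Longrightarrow> eval3 B r x = zeroA B"
  unfolding is_alg_def by auto

lemma is_alg_tau: "is_alg P B \<Longrightarrow> x \<in> carr B \<Longrightarrow> y \<in> carr B \<Longrightarrow> opA B (tauV (fst P) v) x y = opA B v y x"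
  unfolding is_alg_def by auto

definition tr :: "('c \<Rightarrow> 'b) \<Rightarrow> ('c, 'k, 'o) alg \<Rightarrow> ('b, 'k, 'o) alg" where
  "tr g B = \<lparr>carr = g ` carr B, addA = (\<lambda>x y. g (addA B (inv g x) (inv g y))), zeroA = g (zeroA B),
     scaleA = (\<lambda>c x. g (scaleA B c (inv g x))), opA = (\<lambda>v x y. g (opA B v (inv g x) (inv g y)))\<rparr>"

lemma tr_simps[simp]: "carr (tr g B) = g ` carr B" "addA (tr g B) x y = g (addA B (inv g x) (inv g y))"
  "zeroA (tr g B) = g (zeroA B)" "scaleA (tr g B) c x = g (scaleA B c (inv g x))"
  "opA (tr g B) v x y = g (opA B v (inv g x) (inv g y))"
  by (simp_all add: tr_def)

lemma tr_asum: "inj g \<Longrightarrow> asum (tr g B) (\<lambda>i. g (f i)) I = g (asum B f I)"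
proof -
  assume g: "inj g"
  have h: "foldr (\<lambda>i acc. addA (tr g B) (g (f i)) acc) xs (zeroA (tr g B)) =
        g (foldr (\<lambda>i acc. addA B (f i) acc) xs (zeroA B))" for xs
    by (induction xs) (simp_all add: g)
  show ?thesis unfolding asum_def by (rule h)
qed

lemma tr_asum': "inj g \<Longrightarrow> asum (tr g B) f I = g (asum B (\<lambda>i. inv g (f i)) I) \<or> \<not> (\<forall>i. f i \<in> range g)"
  using tr_asum[of g B "\<lambda>i. inv g (f i)" I] by (auto simp: f_inv_into_f)

lemma tr_kvs: "inj g \<Longrightarrow> kvs B \<Longrightarrow> kvs (tr g B)"
  unfolding kvs_def by (auto simp: image_iff)

lemma tr_is_alg: assumes g: "inj g" and B: "is_alg P B" shows "is_alg P (tr g B)"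
proof -
  have ev: "eval3 (tr g B) r x = g (eval3 B r (\<lambda>i. inv g (x i)))" if "\<forall>i. x i \<in> g ` carr B" for r x
  proof -
    define F where "F = (\<lambda>(\<mu>, \<nu>, a, b, c).
      scaleA B (r (\<mu>, \<nu>, a, b, c)) (opA B (bvec \<mu>) (opA B (bvec \<nu>) (inv g (x a)) (inv g (x b))) (inv g (x c))))"
    have "(\<lambda>(\<mu>, \<nu>, a, b, c). scaleA (tr g B) (r (\<mu>, \<nu>, a, b, c))
      (opA (tr g B) (bvec \<mu>) (opA (tr g B) (bvec \<nu>) (x a) (x b)) (x c))) = (\<lambda>m. g (F m))"
      by (auto simp: g F_def)
    then have "eval3 (tr g B) r x = asum (tr g B) (\<lambda>m. g (F m)) UNIV"
      unfolding eval3_def by simp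
    also have "\<dots> = g (asum B F UNIV)" by (rule tr_asum[OF g])
    finally show ?thesis unfolding eval3_def F_def .
  qed
  show ?thesis using B unfolding is_alg_def
    apply (intro conjI)
    subgoal using tr_kvs[OF g, of B] by (simp add: is_alg_def)
    subgoal by (auto simp: g)
    subgoal by (auto simp: g)
    subgoal by (auto simp: g)
    subgoal by (auto simp: g)
    subgoal by (auto simp: g)
    subgoal by (auto simp: g)
    subgoal
    proof (intro ballI allI impI)
      fix r and x :: "v3 \<Rightarrow> _" assume r: "r \<in> snd P" and x: "\<forall>i. x i \<in> carr (tr g B)"
      have "\<forall>i. inv g (x i) \<in> carr B"
      proof
        fix i obtain y where "y \<in> carr B" "x i = g y" using x by auto
        then show "inv g (x i) \<in> carr B" using g by simp
      qed
      then have "eval3 B r (\<lambda>i. inv g (x i)) = zeroA B"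
        using B r by (intro is_alg_rel)
      then show "eval3 (tr g B) r x = zeroA (tr g B)" using ev x by simp
    qed
    done
qed

lemma tr_distr: "distr B a \<Longrightarrow> distr (tr g B) (\<lambda>s. g (a s))"
  by (simp add: distr_def)

lemma tr_loc: "inj g \<Longrightarrow> loc_coef (tr g B) v (\<lambda>s. g (a s)) (\<lambda>s. g (b s)) N m n = g (loc_coef B v a b N m n)"
  unfolding loc_coef_def by (simp add: tr_asum[symmetric])

lemma tr_local_op: "inj g \<Longrightarrow> local_op (tr g B) v (\<lambda>s. g (a s)) (\<lambda>s. g (b s)) = local_op B v a b"
  unfolding local_op_def by (simp add: tr_loc inj_eq)

lemma tr_local: "inj g \<Longrightarrow> local (tr g B) (\<lambda>s. g (a s)) (\<lambda>s. g (b s)) = local B a b"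
  unfolding local_def by (simp add: tr_local_op)

lemma tr_nprod: "inj g \<Longrightarrow> nprod (tr g B) v n (\<lambda>s. g (a s)) (\<lambda>s. g (b s)) = (\<lambda>s. g (nprod B v n a b s))"
  unfolding nprod_def by (simp add: tr_asum[symmetric])

lemma tr_dong: assumes g: "inj g" and D: "dong_alg (tr g B)" shows "dong_alg B"
  unfolding dong_alg_def
proof (intro allI impI)
  fix a b c n v
  assume h: "distr B a \<and> distr B b \<and> distr B c \<and> local B a b \<and> local B b c \<and> local B a c"
  have "local (tr g B) (nprod (tr g B) v n (\<lambda>s. g (a s)) (\<lambda>s. g (b s))) (\<lambda>s. g (c s))"
    using D h unfolding dong_alg_def by (simp add: tr_distr tr_local g)
  then show "local B (nprod B v n a b) c" by (simp add: tr_nprod g tr_local)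
qed

definition labAB :: "'l \<Rightarrow> 'l \<Rightarrow> 'l option \<Rightarrow> v3 set \<Rightarrow> v3 \<Rightarrow> v3 \<Rightarrow> 'l" where
  "labAB lL lR lB S a b = (if a \<in> S \<and> b \<in> S then the lB else if a \<in> S then lL else lR)"

definition lab :: "'l \<Rightarrow> 'l \<Rightarrow> 'l option \<Rightarrow> v3 set \<Rightarrow> v3 \<Rightarrow> v3 \<Rightarrow> v3 \<Rightarrow> 'l \<times> 'l" where
  "lab lL lR lB S a b c = (if c \<notin> S then (lL, labAB lL lR lB S a b)
     else if a \<notin> S \<and> b \<notin> S then (lR, lL) else (the lB, labAB lL lR lB S a b))"

definition Pat :: "'l option \<Rightarrow> v3 set set" where
  "Pat lB = {S. S \<noteq> {} \<and> (lB = None \<longrightarrow> card S = 1)}"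

definition emb :: "'l \<Rightarrow> ('o \<Rightarrow> 'k::field) \<Rightarrow> ('o \<times> 'l \<Rightarrow> 'k)" where
  "emb l v = (\<lambda>(\<mu>, p). if p = l then v \<mu> else 0)"

lemma emb_bvec: "emb l (bvec \<mu>) = bvec (\<mu>, l)"
  by (auto simp: emb_def bvec_def)

lemma emb_add: "emb l (\<lambda>i. v i + w i) = (\<lambda>j. emb l v j + emb l w j)"
  by (rule ext) (auto simp: emb_def split: prod.split)

lemma emb_sc: "emb l (\<lambda>i. c * v i) = (\<lambda>j. c * emb l v j)"
  by (rule ext) (auto simp: emb_def split: prod.split)

lemma emb_vsum: fixes v :: "'o::finite \<Rightarrow> 'k::field" and l :: 'l shows "emb l v = (\<lambda>i. \<Sum>\<mu>\<in>UNIV. v \<mu> * bvec (\<mu>, l) i)"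
proof
  fix i :: "'o \<times> 'l" obtain \<nu> p where i: "i = (\<nu>, p)" by fastforce
  show "emb l v i = (\<Sum>\<mu>\<in>UNIV. v \<mu> * bvec (\<mu>, l) i)"
    unfolding i emb_def bvec_def by (auto simp: if_distrib cong: if_cong)
qed

lemma tau_emb:
  fixes tau :: "'o::finite \<Rightarrow> 'o \<Rightarrow> 'k::field" and swp :: "'l::finite \<Rightarrow> 'l"
  shows "tauV (had_tau swp tau) (emb l v) = emb (swp l) (tauV tau v)"
proof
  fix j :: "'o \<times> 'l" obtain \<nu> q where j: "j = (\<nu>, q)" by fastforce
  have "tauV (had_tau swp tau) (emb l v) (\<nu>, q) =
      (\<Sum>\<mu>\<in>UNIV. \<Sum>p\<in>UNIV. emb l v (\<mu>, p) * had_tau swp tau (\<mu>, p) (\<nu>, q))"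
    unfolding tauV_def by (simp add: sum.cartesian_product flip: UNIV_Times_UNIV)
  also have "\<dots> = (\<Sum>\<mu>\<in>UNIV. \<Sum>p\<in>UNIV. if p = l then v \<mu> * (tau \<mu> \<nu> * (if q = swp l then 1 else 0)) else 0)"
    by (intro sum.cong refl) (auto simp: emb_def had_tau_def)
  also have "\<dots> = (\<Sum>\<mu>\<in>UNIV. v \<mu> * (tau \<mu> \<nu> * (if q = swp l then 1 else 0)))"
    by (simp add: sum.delta)
  also have "\<dots> = emb (swp l) (tauV tau v) (\<nu>, q)"
    by (simp add: emb_def tauV_def sum_distrib_right)
  finally show "tauV (had_tau swp tau) (emb l v) j = emb (swp l) (tauV tau v) j" using j by simp
qed

locale hsetup =
  fixes P :: "('o::finite, 'k::field) bqop"
    and sel :: "'l::finite \<Rightarrow> 'l \<Rightarrow> v3 \<Rightarrow> v3 \<Rightarrow> v3 \<Rightarrow> 's"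
    and swp :: "'l \<Rightarrow> 'l"
    and lL lR :: 'l and lB :: "'l option"
    and sig :: "v3 set \<Rightarrow> 's"
    and A :: "('a, 'k, 'o \<times> 'l) alg"
  assumes alg: "is_alg (had_tau swp (fst P), had_rel P sel) A"
    and bq: "bq_operad P"
    and selR: "\<And>q q' a b c. sel lR q a b c = sel lR q' a b c"
    and swpL: "swp lL = lR" and swpR: "swp lR = lL"
    and swpB: "\<And>l. lB = Some l \<Longrightarrow> swp l = l"
    and lLR: "lL \<noteq> lR" and lBL: "lB \<noteq> Some lL" and lBR: "lB \<noteq> Some lR"
    and labs: "UNIV = {lL, lR} \<union> set_option lB"
    and selS: "\<And>S a b c. S \<in> Pat lB \<Longrightarrow> dist3 a b c \<Longrightarrow>
        sel (fst (lab lL lR lB S a b c)) (snd (lab lL lR lB S a b c)) a b c = sig S"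
begin

sublocale balg A using alg by (rule is_alg_balg)

abbreviation "H0 \<equiv> had_tau swp (fst P)"

lemma tauA: "x \<in> C \<Longrightarrow> y \<in> C \<Longrightarrow> op (tauV H0 v) x y = op v y x"
  using is_alg_tau[OF alg] by simp

lemma relA: "r \<in> had_rel P sel \<Longrightarrow> \<forall>i. x i \<in> C \<Longrightarrow> eval3 A r x = z0"
  using is_alg_rel[OF alg] by simp

lemma ideal3_zero: "(\<lambda>m. 0) \<in> ideal3 P"
  unfolding ideal3_def fspan_def by (rule CollectI, rule exI[of _ "{}"]) simp

lemma ideal3_R: "r \<in> snd P \<Longrightarrow> r \<in> ideal3 P"
proof -
  assume r: "r \<in> snd P"
  have "act3 id r = r" by (auto simp: act3_def)
  then have "r \<in> {act3 \<sigma> r | \<sigma> r. bij \<sigma> \<and> r \<in> snd P}" using r by (metis (mono_tags, lifting) CollectI bij_id)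
  then show ?thesis unfolding ideal3_def fspan_def
    by (intro CollectI exI[of _ "{r}"] exI[of _ "\<lambda>f. 1"]) auto
qed

definition xx3 :: "'a \<Rightarrow> 'a \<Rightarrow> 'a \<Rightarrow> v3 \<Rightarrow> 'a" where
  "xx3 x y w = (\<lambda>i. case i of X1 \<Rightarrow> x | X2 \<Rightarrow> y | X3 \<Rightarrow> w)"

lemma xx3_C: "x \<in> C \<Longrightarrow> y \<in> C \<Longrightarrow> w \<in> C \<Longrightarrow> \<forall>i. xx3 x y w i \<in> C"
  by (auto simp: xx3_def split: v3.split)

lemma eval3_support:
  assumes "\<forall>i. x i \<in> C" "\<And>m. m \<notin> S \<Longrightarrow> r m = 0"
  shows "eval3 A r x = asum A (\<lambda>(\<mu>, \<nu>, a, b, c). sc (r (\<mu>, \<nu>, a, b, c)) (op (bvec \<mu>) (op (bvec \<nu>) (x a) (x b)) (x c))) S"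
  unfolding eval3_def using assms by (intro asum_support) (auto split: prod.split)

lemma two_mon:
  assumes xyw: "x \<in> C" "y \<in> C" "w \<in> C"
    and s: "sel p q X1 X2 X3 = sel p' q' X1 X2 X3"
  shows "op (bvec (\<mu>, p)) (op (bvec (\<nu>, q)) x y) w = op (bvec (\<mu>, p')) (op (bvec (\<nu>, q')) x y) w"
proof (cases "(p, q) = (p', q')")
  case True then show ?thesis by simp
next
  case False
  define m1 where "m1 = ((\<mu>, p), (\<nu>, q), X1, X2, X3)"
  define m2 where "m2 = ((\<mu>, p'), (\<nu>, q'), X1, X2, X3)"
  have m12: "m1 \<noteq> m2" using False by (auto simp: m1_def m2_def)
  define r :: "('o \<times> 'l) \<times> ('o \<times> 'l) \<times> v3 \<times> v3 \<times> v3 \<Rightarrow> 'k" where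
    "r = (\<lambda>m. emono m1 m - emono m2 m)"
  have rel: "r \<in> had_rel P sel"
    unfolding had_rel_def
  proof (intro CollectI conjI allI impI)
    fix \<mu>0 \<nu>0 a b c assume "\<not> dist3 a b c"
    then show "r (\<mu>0, \<nu>0, a, b, c) = 0" by (auto simp: r_def emono_def m1_def m2_def dist3_def)
  next
    fix s0
    have "(\<lambda>(\<mu>0, \<nu>0, a, b, c). \<Sum>pq\<in>{pq. sel (fst pq) (snd pq) a b c = s0}. r ((\<mu>0, fst pq), (\<nu>0, snd pq), a, b, c))
       = (\<lambda>m. 0)"
    proof (intro ext, clarify)
      fix \<mu>0 \<nu>0 a b c
      show "(\<Sum>pq\<in>{pq. sel (fst pq) (snd pq) a b c = s0}. r ((\<mu>0, fst pq), (\<nu>0, snd pq), a, b, c)) = 0"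
      proof (cases "(\<mu>0, \<nu>0, a, b, c) = (\<mu>, \<nu>, X1, X2, X3)")
        case True
        have "(\<Sum>pq\<in>{pq. sel (fst pq) (snd pq) a b c = s0}. r ((\<mu>0, fst pq), (\<nu>0, snd pq), a, b, c)) =
          (\<Sum>pq\<in>{pq. sel (fst pq) (snd pq) a b c = s0}. (if pq = (p, q) then 1 else 0) - (if pq = (p', q') then 1 else 0))"
          using True by (intro sum.cong refl) (auto simp: r_def emono_def m1_def m2_def)
        also have "\<dots> = 0" using True s by (simp add: sum_subtractf sum.delta)
        finally show ?thesis .
      next
        case False
        then show ?thesis by (intro sum.neutral) (auto simp: r_def emono_def m1_def m2_def)
      qed
    qed
    then show "(\<lambda>(\<mu>0, \<nu>0, a, b, c). \<Sum>pq\<in>{pq. sel (fst pq) (snd pq) a b c = s0}. r ((\<mu>0, fst pq), (\<nu>0, snd pq), a, b, c))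
       \<in> ideal3 P" using ideal3_zero by simp
  qed
  let ?x = "xx3 x y w"
  have xc: "\<forall>i. ?x i \<in> C" using xx3_C xyw by blast
  have "eval3 A r ?x = asum A (\<lambda>(\<mu>, \<nu>, a, b, c). sc (r (\<mu>, \<nu>, a, b, c)) (op (bvec \<mu>) (op (bvec \<nu>) (?x a) (?x b)) (?x c))) {m1, m2}"
    using xc by (intro eval3_support) (auto simp: r_def emono_def)
  also have "\<dots> = pl (sc 1 (op (bvec (\<mu>, p)) (op (bvec (\<nu>, q)) x y) w)) (asum A (\<lambda>(\<mu>, \<nu>, a, b, c). sc (r (\<mu>, \<nu>, a, b, c)) (op (bvec \<mu>) (op (bvec \<nu>) (?x a) (?x b)) (?x c))) {m2})"
    using m12 xyw xc by (subst asum_insert) (auto simp: r_def emono_def m1_def m2_def xx3_def)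
  also have "\<dots> = mi (op (bvec (\<mu>, p)) (op (bvec (\<nu>, q)) x y) w) (op (bvec (\<mu>, p')) (op (bvec (\<nu>, q')) x y) w)"
    using m12 xyw xc False by (auto simp: r_def emono_def m1_def m2_def xx3_def)
  finally have "mi (op (bvec (\<mu>, p)) (op (bvec (\<nu>, q)) x y) w) (op (bvec (\<mu>, p')) (op (bvec (\<nu>, q')) x y) w) = z0"
    using relA[OF rel xc] by simp
  then show ?thesis using xyw by (simp add: mi_eq_z0)
qed

lemma BR: "x \<in> C \<Longrightarrow> y \<in> C \<Longrightarrow> w \<in> C \<Longrightarrow>
   op (bvec (\<mu>, lR)) (op (bvec (\<nu>, q)) x y) w = op (bvec (\<mu>, lR)) (op (bvec (\<nu>, lL)) x y) w"
  using selR by (intro two_mon) auto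

end

context kv
begin
lemma mi_mi: "a \<in> C \<Longrightarrow> b \<in> C \<Longrightarrow> L \<in> C \<Longrightarrow> mi (mi a L) (mi b L) = mi a b"
  using mi_swap[of b L] mi_trans[of a L b] by simp
end

context hsetup
begin

lemma op_emb: "x \<in> C \<Longrightarrow> y \<in> C \<Longrightarrow> op (emb l v) x y = asum A (\<lambda>\<mu>. sc (v \<mu>) (op (bvec (\<mu>, l)) x y)) UNIV"
  by (subst emb_vsum) (simp add: op_vsum op_vsc)

inductive_set Id :: "'a set" where
  gen: "x \<in> C \<Longrightarrow> y \<in> C \<Longrightarrow> mi (op (bvec (\<mu>, p)) x y) (op (bvec (\<mu>, lL)) x y) \<in> Id"
| zero: "z0 \<in> Id"
| add: "i \<in> Id \<Longrightarrow> j \<in> Id \<Longrightarrow> pl i j \<in> Id"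
| scal: "i \<in> Id \<Longrightarrow> sc c i \<in> Id"

lemma Id_C: "i \<in> Id \<Longrightarrow> i \<in> C"
  by (induction rule: Id.induct) auto

lemma Id_mi: "i \<in> Id \<Longrightarrow> j \<in> Id \<Longrightarrow> mi i j \<in> Id"
  by (intro Id.add Id.scal)

lemma Id_asum: "finite I \<Longrightarrow> \<forall>i\<in>I. f i \<in> Id \<Longrightarrow> asum A f I \<in> Id"
proof (induction I rule: finite_induct)
  case empty then show ?case by (simp add: Id.zero)
next
  case (insert x F)
  then show ?case using Id_C by (simp add: asum_insert Id.add)
qed

lemma gen_any: "x \<in> C \<Longrightarrow> y \<in> C \<Longrightarrow> mi (op (bvec (\<mu>, p)) x y) (op (bvec (\<mu>, p')) x y) \<in> Id"
proof -
  assume xy: "x \<in> C" "y \<in> C"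
  have "mi (mi (op (bvec (\<mu>, p)) x y) (op (bvec (\<mu>, lL)) x y)) (mi (op (bvec (\<mu>, p')) x y) (op (bvec (\<mu>, lL)) x y)) \<in> Id"
    using xy by (intro Id_mi Id.gen)
  then show ?thesis using xy mi_mi[of "op (bvec (\<mu>, p)) x y" "op (bvec (\<mu>, p')) x y" "op (bvec (\<mu>, lL)) x y"] by simp
qed

lemma opR_Id: "i \<in> Id \<Longrightarrow> w \<in> C \<Longrightarrow> op (bvec (\<mu>, lR)) i w = z0"
proof (induction rule: Id.induct)
  case (gen x y \<nu> p)
  then show ?case by (simp add: op_mil BR[of x y w \<mu> \<nu> p])
next
  case zero then show ?case by simp
next
  case (add i j) then show ?case using Id_C by (simp add: op_addl)
next
  case (scal i c) then show ?case using Id_C by (simp add: op_scl)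
qed

lemma opR_emb: "i \<in> Id \<Longrightarrow> w \<in> C \<Longrightarrow> op (emb lR v) i w = z0"
  using Id_C by (simp add: op_emb opR_Id asum_zero)

lemma opL_emb: "i \<in> Id \<Longrightarrow> w \<in> C \<Longrightarrow> op (emb lL v) w i = z0"
proof -
  assume a: "i \<in> Id" "w \<in> C"
  have "op (emb lL v) w i = op (tauV H0 (emb lL v)) i w" using a Id_C tauA by simp
  also have "\<dots> = op (emb lR (tauV (fst P) v)) i w" by (simp add: tau_emb swpL)
  finally show ?thesis using opR_emb a by simp
qed

lemma Id_opl_basis: "i \<in> Id \<Longrightarrow> w \<in> C \<Longrightarrow> op (bvec j) i w \<in> Id"
proof (induction rule: Id.induct)
  case (gen x y \<nu> p)
  obtain \<mu>' p' where j: "j = (\<mu>', p')" by fastforce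
  define t1 where "t1 = op (bvec (\<nu>, p)) x y"
  define t2 where "t2 = op (bvec (\<nu>, lL)) x y"
  have t: "t1 \<in> C" "t2 \<in> C" using gen by (auto simp: t1_def t2_def)
  have R: "op (bvec (\<mu>', lR)) t1 w = op (bvec (\<mu>', lR)) t2 w"
    unfolding t1_def t2_def using gen by (rule BR)
  have "op (bvec j) (mi t1 t2) w = mi (op (bvec j) t1 w) (op (bvec j) t2 w)"
    using t gen by (simp add: op_mil)
  also have "\<dots> = mi (mi (op (bvec j) t1 w) (op (bvec (\<mu>', lR)) t1 w)) (mi (op (bvec j) t2 w) (op (bvec (\<mu>', lR)) t2 w))"
    using t gen R by (simp add: mi_mi)
  finally show ?case unfolding t1_def t2_def
    using Id_mi[OF gen_any gen_any] t gen j unfolding t1_def t2_def by simp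
next
  case zero then show ?case by (simp add: Id.zero)
next
  case (add i j) then show ?case using Id_C by (simp add: op_addl Id.add)
next
  case (scal i c) then show ?case using Id_C by (simp add: op_scl Id.scal)
qed

lemma Id_opl: "i \<in> Id \<Longrightarrow> w \<in> C \<Longrightarrow> op V i w \<in> Id"
proof -
  assume a: "i \<in> Id" "w \<in> C"
  have "op V i w = asum A (\<lambda>j. sc (V j) (op (bvec j) i w)) UNIV" using a Id_C by (intro op_expand) auto
  moreover have "asum A (\<lambda>j. sc (V j) (op (bvec j) i w)) UNIV \<in> Id"
    using a by (intro Id_asum ballI Id.scal Id_opl_basis) auto
  ultimately show ?thesis by simp
qed

lemma Id_opr: "i \<in> Id \<Longrightarrow> w \<in> C \<Longrightarrow> op V w i \<in> Id"
  using Id_opl[of i w "tauV H0 V"] tauA[of i w V] Id_C by simp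

lemma emb_diff: "x \<in> C \<Longrightarrow> y \<in> C \<Longrightarrow> mi (op (emb p v) x y) (op (emb p' v) x y) \<in> Id"
proof -
  assume xy: "x \<in> C" "y \<in> C"
  have "mi (op (emb p v) x y) (op (emb p' v) x y) =
      asum A (\<lambda>\<mu>. sc (v \<mu>) (mi (op (bvec (\<mu>, p)) x y) (op (bvec (\<mu>, p')) x y))) UNIV"
    using xy by (simp add: op_emb asum_mi[symmetric] sc_mi)
  moreover have "asum A (\<lambda>\<mu>. sc (v \<mu>) (mi (op (bvec (\<mu>, p)) x y) (op (bvec (\<mu>, p')) x y))) UNIV \<in> Id"
    using xy by (intro Id_asum ballI Id.scal gen_any) auto
  ultimately show ?thesis by simp
qed

definition eqv :: "'a \<Rightarrow> 'a \<Rightarrow> bool" where "eqv x y \<longleftrightarrow> x \<in> C \<and> y \<in> C \<and> mi x y \<in> Id"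

lemma eqv_refl: "x \<in> C \<Longrightarrow> eqv x x" by (simp add: eqv_def Id.zero)

lemma eqv_sym: "eqv x y \<Longrightarrow> eqv y x"
  unfolding eqv_def using mi_swap[of x y] Id.scal[of "mi x y" "-1"] by simp

lemma eqv_trans: "eqv x y \<Longrightarrow> eqv y w \<Longrightarrow> eqv x w"
  unfolding eqv_def using mi_trans[of x y w] Id.add[of "mi x y" "mi y w"] by simp

lemma eqv_pl: "eqv x x' \<Longrightarrow> eqv y y' \<Longrightarrow> eqv (pl x y) (pl x' y')"
  unfolding eqv_def by (simp add: mi_pl Id.add)

lemma eqv_sc: "eqv x x' \<Longrightarrow> eqv (sc c x) (sc c x')"
  unfolding eqv_def by (simp add: sc_mi[symmetric] Id.scal)

lemma eqv_op: "eqv x x' \<Longrightarrow> eqv y y' \<Longrightarrow> eqv (op V x y) (op V x' y')"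
proof -
  assume a: "eqv x x'" "eqv y y'"
  then have c: "x \<in> C" "x' \<in> C" "y \<in> C" "y' \<in> C" by (auto simp: eqv_def)
  have "mi (op V x y) (op V x' y') = pl (mi (op V x y) (op V x' y)) (mi (op V x' y) (op V x' y'))"
    using c by (simp add: mi_trans)
  also have "\<dots> = pl (op V (mi x x') y) (op V x' (mi y y'))" using c by (simp add: op_mil op_mir)
  finally show ?thesis using a c unfolding eqv_def by (simp add: Id.add Id_opl Id_opr)
qed

lemma eqv_opR: "eqv x x' \<Longrightarrow> y \<in> C \<Longrightarrow> op (emb lR v) x y = op (emb lR v) x' y"
  unfolding eqv_def using opR_emb[of "mi x x'" y v] by (simp add: op_mil mi_eq_z0)

lemma eqv_opL: "eqv x x' \<Longrightarrow> y \<in> C \<Longrightarrow> op (emb lL v) y x = op (emb lL v) y x'"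
  unfolding eqv_def using opL_emb[of "mi x x'" y v] by (simp add: op_mir mi_eq_z0)

lemma eqv_emb: "x \<in> C \<Longrightarrow> y \<in> C \<Longrightarrow> eqv (op (emb p v) x y) (op (emb p' v) x y)"
  unfolding eqv_def using emb_diff by simp

lemma eqv_asum: "finite I \<Longrightarrow> \<forall>i\<in>I. eqv (f i) (g i) \<Longrightarrow> eqv (asum A f I) (asum A g I)"
proof (induction I rule: finite_induct)
  case empty then show ?case by (simp add: eqv_refl)
next
  case (insert x F)
  have "\<forall>i\<in>insert x F. f i \<in> C \<and> g i \<in> C" using insert by (auto simp: eqv_def)
  then show ?case using insert by (simp add: asum_insert eqv_pl)
qed

definition cls :: "'a \<Rightarrow> 'a set" where "cls x = {y. eqv y x}"
definition Cl :: "'a set set" where "Cl = cls ` C"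
definition rep :: "'a set \<Rightarrow> 'a" where "rep X = (SOME x. x \<in> C \<and> X = cls x)"

lemma cls_eq_iff: "x \<in> C \<Longrightarrow> y \<in> C \<Longrightarrow> cls x = cls y \<longleftrightarrow> eqv x y"
proof
  assume x: "x \<in> C" "y \<in> C" "cls x = cls y"
  then have "x \<in> cls y" using eqv_refl by (metis cls_def mem_Collect_eq)
  then show "eqv x y" by (simp add: cls_def)
next
  assume "eqv x y"
  then show "cls x = cls y" unfolding cls_def using eqv_sym eqv_trans by blast
qed

lemma cls_eqI: "eqv x y \<Longrightarrow> cls x = cls y"
  using cls_eq_iff eqv_def by blast

lemma rep_cls: "x \<in> C \<Longrightarrow> rep (cls x) \<in> C \<and> eqv (rep (cls x)) x"
proof -
  assume x: "x \<in> C"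
  have "\<exists>y. y \<in> C \<and> cls x = cls y" using x by blast
  then have "rep (cls x) \<in> C \<and> cls x = cls (rep (cls x))" unfolding rep_def by (rule someI_ex)
  then show ?thesis using x cls_eq_iff eqv_sym by blast
qed

lemma rep_C: "X \<in> Cl \<Longrightarrow> rep X \<in> C" using rep_cls Cl_def by auto

lemma cls_rep: "X \<in> Cl \<Longrightarrow> cls (rep X) = X"
proof -
  assume "X \<in> Cl"
  then obtain x where x: "x \<in> C" "X = cls x" by (auto simp: Cl_def)
  then show ?thesis using rep_cls[OF x(1)] cls_eqI by simp
qed

lemma Cl_cls[simp]: "x \<in> C \<Longrightarrow> cls x \<in> Cl" by (simp add: Cl_def)

end

context kv
begin
lemma pl6: "a1 \<in> C \<Longrightarrow> a2 \<in> C \<Longrightarrow> b1 \<in> C \<Longrightarrow> b2 \<in> C \<Longrightarrow> c1 \<in> C \<Longrightarrow> c2 \<in> C \<Longrightarrow>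
  pl (pl (pl a1 a2) (pl b1 b2)) (pl c1 c2) = pl (pl (pl a1 b1) c1) (pl (pl a2 b2) c2)"
proof -
  assume a: "a1 \<in> C" "a2 \<in> C" "b1 \<in> C" "b2 \<in> C" "c1 \<in> C" "c2 \<in> C"
  have "pl (pl a1 a2) (pl b1 b2) = pl (pl a1 b1) (pl a2 b2)" using a by (intro pl4)
  then have "pl (pl (pl a1 a2) (pl b1 b2)) (pl c1 c2) = pl (pl (pl a1 b1) (pl a2 b2)) (pl c1 c2)" by simp
  also have "\<dots> = pl (pl (pl a1 b1) c1) (pl (pl a2 b2) c2)" using a by (intro pl4) auto
  finally show ?thesis .
qed
end

context hsetup
begin

definition opB :: "('o \<Rightarrow> 'k) \<Rightarrow> 'a \<Rightarrow> 'a \<Rightarrow> 'a" where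
  "opB v x y = (case lB of None \<Rightarrow> z0 | Some l \<Rightarrow> op (emb l v) x y)"

lemma opB_C[simp]: "x \<in> C \<Longrightarrow> y \<in> C \<Longrightarrow> opB v x y \<in> C"
  by (simp add: opB_def split: option.split)
lemma opB_addl: "x \<in> C \<Longrightarrow> x' \<in> C \<Longrightarrow> y \<in> C \<Longrightarrow> opB v (pl x x') y = pl (opB v x y) (opB v x' y)"
  by (simp add: opB_def op_addl split: option.split)
lemma opB_addr: "x \<in> C \<Longrightarrow> x' \<in> C \<Longrightarrow> y \<in> C \<Longrightarrow> opB v y (pl x x') = pl (opB v y x) (opB v y x')"
  by (simp add: opB_def op_addr split: option.split)
lemma opB_scl: "x \<in> C \<Longrightarrow> y \<in> C \<Longrightarrow> opB v (sc c x) y = sc c (opB v x y)"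
  by (simp add: opB_def op_scl split: option.split)
lemma opB_scr: "x \<in> C \<Longrightarrow> y \<in> C \<Longrightarrow> opB v x (sc c y) = sc c (opB v x y)"
  by (simp add: opB_def op_scr split: option.split)
lemma opB_vadd: "x \<in> C \<Longrightarrow> y \<in> C \<Longrightarrow> opB (\<lambda>i. v i + w i) x y = pl (opB v x y) (opB w x y)"
  by (simp add: opB_def op_vadd emb_add split: option.split)
lemma opB_vsc: "x \<in> C \<Longrightarrow> y \<in> C \<Longrightarrow> opB (\<lambda>i. c * v i) x y = sc c (opB v x y)"
  by (simp add: opB_def op_vsc emb_sc split: option.split)
lemma opB_tau: "x \<in> C \<Longrightarrow> y \<in> C \<Longrightarrow> opB (tauV (fst P) v) x y = opB v y x"
proof (cases lB)
  case (Some l)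
  assume xy: "x \<in> C" "y \<in> C"
  have "op (emb l v) y x = op (tauV H0 (emb l v)) x y" using xy tauA by simp
  then show ?thesis unfolding opB_def using Some swpB[OF Some] by (simp add: tau_emb)
qed (unfold opB_def, simp)
lemma opB_z0l[simp]: "y \<in> C \<Longrightarrow> opB v z0 y = z0" by (simp add: opB_def split: option.split)
lemma opB_z0r[simp]: "y \<in> C \<Longrightarrow> opB v y z0 = z0" by (simp add: opB_def split: option.split)

definition Hat :: "('a set \<times> 'a, 'k, 'o) alg" where
  "Hat = \<lparr>carr = Cl \<times> C,
     addA = (\<lambda>h1 h2. (cls (pl (rep (fst h1)) (rep (fst h2))), pl (snd h1) (snd h2))),
     zeroA = (cls z0, z0),
     scaleA = (\<lambda>c h. (cls (sc c (rep (fst h))), sc c (snd h))),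
     opA = (\<lambda>v h1 h2. (cls (op (emb lL v) (rep (fst h1)) (rep (fst h2))),
        pl (pl (op (emb lL v) (snd h1) (rep (fst h2))) (op (emb lR v) (rep (fst h1)) (snd h2)))
           (opB v (snd h1) (snd h2))))\<rparr>"

lemma Hat_carr: "carr Hat = Cl \<times> C" by (simp add: Hat_def)
lemma Hat_zero: "zeroA Hat = (cls z0, z0)" by (simp add: Hat_def)

lemma Hat_add: "u \<in> C \<Longrightarrow> u' \<in> C \<Longrightarrow> addA Hat (cls u, x) (cls u', x') = (cls (pl u u'), pl x x')"
  using rep_cls by (simp add: Hat_def cls_eqI eqv_pl)

lemma Hat_sc: "u \<in> C \<Longrightarrow> scaleA Hat c (cls u, x) = (cls (sc c u), sc c x)"
  using rep_cls by (simp add: Hat_def cls_eqI eqv_sc)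

lemma Hat_op: "u \<in> C \<Longrightarrow> u' \<in> C \<Longrightarrow> x \<in> C \<Longrightarrow> x' \<in> C \<Longrightarrow> opA Hat v (cls u, x) (cls u', x') =
   (cls (op (emb lL v) u u'), pl (pl (op (emb lL v) x u') (op (emb lR v) u x')) (opB v x x'))"
proof -
  assume a: "u \<in> C" "u' \<in> C" "x \<in> C" "x' \<in> C"
  have r: "rep (cls u) \<in> C" "eqv (rep (cls u)) u" "rep (cls u') \<in> C" "eqv (rep (cls u')) u'"
    using rep_cls a by auto
  have "cls (op (emb lL v) (rep (cls u)) (rep (cls u'))) = cls (op (emb lL v) u u')"
    using r by (intro cls_eqI eqv_op)
  moreover have "op (emb lL v) x (rep (cls u')) = op (emb lL v) x u'" using r a by (intro eqv_opL)
  moreover have "op (emb lR v) (rep (cls u)) x' = op (emb lR v) u x'" using r a by (intro eqv_opR)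
  ultimately show ?thesis by (simp add: Hat_def)
qed

lemma Hat_all: "(\<forall>h\<in>carr Hat. Q h) \<longleftrightarrow> (\<forall>u\<in>C. \<forall>x\<in>C. Q (cls u, x))"
  by (auto simp: Hat_carr Cl_def)

lemma Hat_mem: "u \<in> C \<Longrightarrow> x \<in> C \<Longrightarrow> (cls u, x) \<in> carr Hat"
  by (simp add: Hat_carr)

lemma cls_z0_iff: "u \<in> C \<Longrightarrow> cls u = cls z0 \<longleftrightarrow> u \<in> Id"
  by (simp add: cls_eq_iff eqv_def)

lemma Hat_kvs: "kvs Hat"
  unfolding kvs_def Hat_all
proof (intro conjI ballI allI)
  show "zeroA Hat \<in> carr Hat" by (simp add: Hat_zero Hat_carr)
next
  fix u x u' x' u'' x'' assume a: "u \<in> C" "x \<in> C" "u' \<in> C" "x' \<in> C" "u'' \<in> C" "x'' \<in> C"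
  show "addA Hat (cls u, x) (cls u', x') \<in> carr Hat" using a by (simp add: Hat_add Hat_carr)
  show "addA Hat (addA Hat (cls u, x) (cls u', x')) (cls u'', x'') = addA Hat (cls u, x) (addA Hat (cls u', x') (cls u'', x''))"
    using a by (simp add: Hat_add pl_assoc)
  show "addA Hat (cls u, x) (cls u', x') = addA Hat (cls u', x') (cls u, x)"
    using a by (simp add: Hat_add pl_comm)
next
  fix c u x assume a: "u \<in> C" "x \<in> C"
  show "scaleA Hat c (cls u, x) \<in> carr Hat" using a by (simp add: Hat_sc Hat_carr)
next
  fix u x assume a: "u \<in> C" "x \<in> C"
  show "addA Hat (zeroA Hat) (cls u, x) = (cls u, x)" using a by (simp add: Hat_add Hat_zero)
  show "addA Hat (cls u, x) (scaleA Hat (- 1) (cls u, x)) = zeroA Hat" using a by (simp add: Hat_add Hat_sc Hat_zero pl_neg)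
  show "scaleA Hat 1 (cls u, x) = (cls u, x)" using a by (simp add: Hat_sc)
next
  fix c d u x assume a: "u \<in> C" "x \<in> C"
  show "scaleA Hat (c * d) (cls u, x) = scaleA Hat c (scaleA Hat d (cls u, x))" using a by (simp add: Hat_sc sc_mult)
  show "scaleA Hat (c + d) (cls u, x) = addA Hat (scaleA Hat c (cls u, x)) (scaleA Hat d (cls u, x))"
    using a by (simp add: Hat_sc Hat_add sc_add)
next
  fix c u x u' x' assume a: "u \<in> C" "x \<in> C" "u' \<in> C" "x' \<in> C"
  show "scaleA Hat c (addA Hat (cls u, x) (cls u', x')) = addA Hat (scaleA Hat c (cls u, x)) (scaleA Hat c (cls u', x'))"
    using a by (simp add: Hat_sc Hat_add sc_pl)
qed

lemma Hat_is_alg: "(\<forall>r\<in>snd P. \<forall>x. (\<forall>i. x i \<in> carr Hat) \<longrightarrow> eval3 Hat r x = zeroA Hat) \<Longrightarrow> is_alg P Hat"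
  unfolding is_alg_def Hat_all
proof (intro conjI ballI allI)
  show "kvs Hat" by (rule Hat_kvs)
next
  fix v u x u' x' assume a: "u \<in> C" "x \<in> C" "u' \<in> C" "x' \<in> C"
  show "opA Hat v (cls u, x) (cls u', x') \<in> carr Hat" using a by (simp add: Hat_op Hat_carr)
next
  fix v u x u' x' u'' x'' assume a: "u \<in> C" "x \<in> C" "u' \<in> C" "x' \<in> C" "u'' \<in> C" "x'' \<in> C"
  show "opA Hat v (addA Hat (cls u, x) (cls u', x')) (cls u'', x'') =
    addA Hat (opA Hat v (cls u, x) (cls u'', x'')) (opA Hat v (cls u', x') (cls u'', x''))"
    using a by (simp add: Hat_op Hat_add op_addl opB_addl pl6)
  show "opA Hat v (cls u'', x'') (addA Hat (cls u, x) (cls u', x')) =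
    addA Hat (opA Hat v (cls u'', x'') (cls u, x)) (opA Hat v (cls u'', x'') (cls u', x'))"
    using a by (simp add: Hat_op Hat_add op_addr opB_addr pl6)
next
  fix v c u x u' x' assume a: "u \<in> C" "x \<in> C" "u' \<in> C" "x' \<in> C"
  show "opA Hat v (scaleA Hat c (cls u, x)) (cls u', x') = scaleA Hat c (opA Hat v (cls u, x) (cls u', x'))"
    using a by (simp add: Hat_op Hat_sc op_scl opB_scl sc_pl)
  show "opA Hat v (cls u, x) (scaleA Hat c (cls u', x')) = scaleA Hat c (opA Hat v (cls u, x) (cls u', x'))"
    using a by (simp add: Hat_op Hat_sc op_scr opB_scr sc_pl)
next
  fix v w u x u' x' assume a: "u \<in> C" "x \<in> C" "u' \<in> C" "x' \<in> C"
  show "opA Hat (\<lambda>i. v i + w i) (cls u, x) (cls u', x') = addA Hat (opA Hat v (cls u, x) (cls u', x')) (opA Hat w (cls u, x) (cls u', x'))"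
    using a by (simp add: Hat_op Hat_add emb_add op_vadd opB_vadd pl6)
next
  fix v c u x u' x' assume a: "u \<in> C" "x \<in> C" "u' \<in> C" "x' \<in> C"
  show "opA Hat (\<lambda>i. c * v i) (cls u, x) (cls u', x') = scaleA Hat c (opA Hat v (cls u, x) (cls u', x'))"
    using a by (simp add: Hat_op Hat_sc emb_sc op_vsc opB_vsc sc_pl)
next
  fix v u x u' x' assume a: "u \<in> C" "x \<in> C" "u' \<in> C" "x' \<in> C"
  have e1: "op (emb lL v) u' u = op (emb lR (tauV (fst P) v)) u u'"
    using a tauA[of u u' "emb lL v"] by (simp add: tau_emb swpL)
  have e2: "op (emb lL v) x' u = op (emb lR (tauV (fst P) v)) u x'"
    using a tauA[of u x' "emb lL v"] by (simp add: tau_emb swpL)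
  have e3: "op (emb lR v) u' x = op (emb lL (tauV (fst P) v)) x u'"
    using a tauA[of x u' "emb lR v"] by (simp add: tau_emb swpR)
  have c1: "cls (op (emb lL (tauV (fst P) v)) u u') = cls (op (emb lR (tauV (fst P) v)) u u')"
    using a by (intro cls_eqI eqv_emb)
  show "opA Hat (tauV (fst P) v) (cls u, x) (cls u', x') = opA Hat v (cls u', x') (cls u, x)"
    using a by (simp add: Hat_op e1 e2 e3 c1 opB_tau pl_comm)
next
  fix r x assume "\<forall>r\<in>snd P. \<forall>x. (\<forall>i. x i \<in> carr Hat) \<longrightarrow> eval3 Hat r x = zeroA Hat" "r \<in> snd P"
  then show "(\<forall>i. x i \<in> carr Hat) \<longrightarrow> eval3 Hat r x = zeroA Hat" by blast
qed

end

context hsetup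
begin

definition zS :: "v3 set \<Rightarrow> (v3 \<Rightarrow> 'a) \<Rightarrow> (v3 \<Rightarrow> 'a) \<Rightarrow> v3 \<Rightarrow> 'a" where
  "zS S y u i = (if i \<in> S then y i else u i)"

definition TT :: "v3 set \<Rightarrow> (v3 \<Rightarrow> 'a) \<Rightarrow> 'o \<times> 'o \<times> v3 \<times> v3 \<times> v3 \<Rightarrow> 'a" where
  "TT S z = (\<lambda>(\<mu>, \<nu>, a, b, c). op (bvec (\<mu>, fst (lab lL lR lB S a b c)))
      (op (bvec (\<nu>, snd (lab lL lR lB S a b c))) (z a) (z b)) (z c))"

definition rS :: "v3 set \<Rightarrow> ('o \<times> 'o \<times> v3 \<times> v3 \<times> v3 \<Rightarrow> 'k) \<Rightarrow> ('o \<times> 'l) \<times> ('o \<times> 'l) \<times> v3 \<times> v3 \<times> v3 \<Rightarrow> 'k" where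
  "rS S r = (\<lambda>((\<mu>, p), (\<nu>, q), a, b, c). if (p, q) = lab lL lR lB S a b c then r (\<mu>, \<nu>, a, b, c) else 0)"

lemma R_nondist: "r \<in> snd P \<Longrightarrow> \<not> dist3 a b c \<Longrightarrow> r (\<mu>, \<nu>, a, b, c) = 0"
  using bq unfolding bq_operad_def by blast

lemma rS_rel: assumes r: "r \<in> snd P" and S: "S \<in> Pat lB" shows "rS S r \<in> had_rel P sel"
  unfolding had_rel_def
proof (intro CollectI conjI allI impI)
  fix \<mu> \<nu> a b c assume "\<not> dist3 a b c"
  then show "rS S r (\<mu>, \<nu>, a, b, c) = 0" using R_nondist[OF r]
    by (cases \<mu>; cases \<nu>) (auto simp: rS_def)
next
  fix s
  have "(\<lambda>(\<mu>, \<nu>, a, b, c). \<Sum>pq\<in>{pq. sel (fst pq) (snd pq) a b c = s}. rS S r ((\<mu>, fst pq), (\<nu>, snd pq), a, b, c))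
      = (if sig S = s then r else (\<lambda>m. 0))"
  proof (intro ext, clarify)
    fix \<mu> \<nu> a b c
    have "(\<Sum>pq\<in>{pq. sel (fst pq) (snd pq) a b c = s}. rS S r ((\<mu>, fst pq), (\<nu>, snd pq), a, b, c)) =
       (\<Sum>pq\<in>{pq. sel (fst pq) (snd pq) a b c = s}. if pq = lab lL lR lB S a b c then r (\<mu>, \<nu>, a, b, c) else 0)"
      by (intro sum.cong refl) (auto simp: rS_def)
    also have "\<dots> = (if lab lL lR lB S a b c \<in> {pq. sel (fst pq) (snd pq) a b c = s} then r (\<mu>, \<nu>, a, b, c) else 0)"
      by (simp add: sum.delta')
    also have "\<dots> = (if sig S = s then r else (\<lambda>m. 0)) (\<mu>, \<nu>, a, b, c)"
      using selS[OF S, of a b c] R_nondist[OF r, of a b c] by (cases "dist3 a b c") auto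
    finally show "(\<Sum>pq\<in>{pq. sel (fst pq) (snd pq) a b c = s}. rS S r ((\<mu>, fst pq), (\<nu>, snd pq), a, b, c)) =
       (if sig S = s then r else (\<lambda>m. 0)) (\<mu>, \<nu>, a, b, c)" .
  qed
  then show "(\<lambda>(\<mu>, \<nu>, a, b, c). \<Sum>pq\<in>{pq. sel (fst pq) (snd pq) a b c = s}. rS S r ((\<mu>, fst pq), (\<nu>, snd pq), a, b, c))
      \<in> ideal3 P" using ideal3_zero ideal3_R[OF r] by simp
qed

definition embS :: "v3 set \<Rightarrow> 'o \<times> 'o \<times> v3 \<times> v3 \<times> v3 \<Rightarrow> ('o \<times> 'l) \<times> ('o \<times> 'l) \<times> v3 \<times> v3 \<times> v3" where
  "embS S = (\<lambda>(\<mu>, \<nu>, a, b, c). ((\<mu>, fst (lab lL lR lB S a b c)), (\<nu>, snd (lab lL lR lB S a b c)), a, b, c))"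

lemma EV:
  assumes r: "r \<in> snd P" and S: "S \<in> Pat lB" and z: "\<forall>i. z i \<in> C"
  shows "asum A (\<lambda>m. sc (r m) (TT S z m)) UNIV = z0"
proof -
  let ?F = "\<lambda>(\<mu>, \<nu>, a, b, c). sc (rS S r (\<mu>, \<nu>, a, b, c)) (op (bvec \<mu>) (op (bvec \<nu>) (z a) (z b)) (z c))"
  have "eval3 A (rS S r) z = z0" using relA[OF rS_rel[OF r S] z] .
  moreover have "eval3 A (rS S r) z = asum A ?F (embS S ` UNIV)"
    unfolding eval3_def using z
  proof (intro asum_support)
    fix m assume "m \<in> UNIV - embS S ` UNIV"
    then show "?F m = z0" using z
      by (cases m) (auto simp: rS_def embS_def image_iff split: if_splits prod.splits; metis fst_conv snd_conv)
  qed (auto split: prod.split)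
  moreover have "asum A ?F (embS S ` UNIV) = asum A (\<lambda>m. ?F (embS S m)) UNIV"
    using z by (intro asum_reindex) (auto simp: inj_on_def embS_def split: prod.split)
  moreover have "asum A (\<lambda>m. ?F (embS S m)) UNIV = asum A (\<lambda>m. sc (r m) (TT S z m)) UNIV"
    by (intro asum_cong) (auto simp: embS_def rS_def TT_def split: prod.split)
  ultimately show ?thesis by simp
qed

end

lemma dist3_cases: "dist3 a b c \<Longrightarrow> i = a \<or> i = b \<or> i = c"
  by (cases i; cases a; cases b; cases c) (auto simp: dist3_def)

definition msk :: "v3 \<Rightarrow> v3 \<Rightarrow> v3 \<Rightarrow> bool \<times> bool \<times> bool \<Rightarrow> v3 set" where
  "msk a b c M = {i. (i = a \<and> fst M) \<or> (i = b \<and> fst (snd M)) \<or> (i = c \<and> snd (snd M))}"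

definition Mk :: "'l option \<Rightarrow> (bool \<times> bool \<times> bool) set" where
  "Mk lB = (case lB of None \<Rightarrow> {(True, False, False), (False, True, False), (False, False, True)}
     | Some l \<Rightarrow> {(True, False, False), (False, True, False), (True, True, False), (False, False, True),
                (True, False, True), (False, True, True), (True, True, True)})"

lemma msk_eq: assumes d: "dist3 a b c" shows "S = msk a b c (a \<in> S, b \<in> S, c \<in> S)"
proof (rule set_eqI)
  fix i show "i \<in> S \<longleftrightarrow> i \<in> msk a b c (a \<in> S, b \<in> S, c \<in> S)"
    using dist3_cases[OF d, of i] d by (auto simp: msk_def dist3_def)
qed

lemma inj_msk: "dist3 a b c \<Longrightarrow> inj_on (msk a b c) M"
  unfolding inj_on_def msk_def dist3_def by (auto simp: set_eq_iff)

lemma Pat_msk: assumes d: "dist3 a b c" shows "Pat lB = msk a b c ` Mk lB"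
proof (cases lB)
  case None
  have "Pat lB = {{a}, {b}, {c}}"
  proof (rule set_eqI)
    fix S show "S \<in> Pat lB \<longleftrightarrow> S \<in> {{a}, {b}, {c}}"
      unfolding Pat_def using None dist3_cases[OF d] by (auto simp: card_1_singleton_iff)
  qed
  moreover have "msk a b c ` Mk lB = {{a}, {b}, {c}}"
    using None d by (auto simp: Mk_def msk_def dist3_def)
  ultimately show ?thesis by simp
next
  case (Some l)
  show ?thesis
  proof (rule set_eqI)
    fix S
    show "S \<in> Pat lB \<longleftrightarrow> S \<in> msk a b c ` Mk lB"
    proof
      assume "S \<in> Pat lB"
      then have ne: "S \<noteq> {}" by (simp add: Pat_def)
      obtain x where "x \<in> S" using ne by blast
      then have "a \<in> S \<or> b \<in> S \<or> c \<in> S" using dist3_cases[OF d, of x] by auto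
      then have "(a \<in> S, b \<in> S, c \<in> S) \<in> Mk lB"
        using Some by (cases "a \<in> S"; cases "b \<in> S"; cases "c \<in> S") (auto simp: Mk_def)
      then show "S \<in> msk a b c ` Mk lB" using msk_eq[OF d, of S] by blast
    next
      assume "S \<in> msk a b c ` Mk lB"
      then show "S \<in> Pat lB" using Some by (auto simp: Mk_def Pat_def msk_def)
    qed
  qed
qed

context hsetup
begin

definition hs :: "'o \<Rightarrow> 'a \<Rightarrow> 'a \<Rightarrow> 'a \<Rightarrow> 'a \<Rightarrow> 'a" where
  "hs \<nu> y1 u1 y2 u2 = pl (pl (op (bvec (\<nu>, lL)) y1 u2) (op (bvec (\<nu>, lR)) u1 y2)) (opB (bvec \<nu>) y1 y2)"

lemma hs_C[simp]: "y1 \<in> C \<Longrightarrow> u1 \<in> C \<Longrightarrow> y2 \<in> C \<Longrightarrow> u2 \<in> C \<Longrightarrow> hs \<nu> y1 u1 y2 u2 \<in> C"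
  by (simp add: hs_def)

lemma Hat_op_bvec: "u1 \<in> C \<Longrightarrow> u2 \<in> C \<Longrightarrow> y1 \<in> C \<Longrightarrow> y2 \<in> C \<Longrightarrow>
  opA Hat (bvec \<nu>) (cls u1, y1) (cls u2, y2) = (cls (op (bvec (\<nu>, lL)) u1 u2), hs \<nu> y1 u1 y2 u2)"
  by (simp add: Hat_op hs_def emb_bvec)

lemma SND:
  assumes d: "dist3 a b c" and y: "\<forall>i. y i \<in> C" and u: "\<forall>i. u i \<in> C"
  shows "hs \<mu> (hs \<nu> (y a) (u a) (y b) (u b)) (op (bvec (\<nu>, lL)) (u a) (u b)) (y c) (u c) =
    asum A (\<lambda>S. TT S (zS S y u) (\<mu>, \<nu>, a, b, c)) (Pat lB)"
proof -
  have ne: "a \<noteq> b" "b \<noteq> c" "a \<noteq> c" "b \<noteq> a" "c \<noteq> b" "c \<noteq> a" using d by (auto simp: dist3_def)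
  have TTC: "\<forall>S. TT S (zS S y u) (\<mu>, \<nu>, a, b, c) \<in> C" using y u by (simp add: TT_def zS_def)
  have "asum A (\<lambda>S. TT S (zS S y u) (\<mu>, \<nu>, a, b, c)) (Pat lB) =
      asum A (\<lambda>M. TT (msk a b c M) (zS (msk a b c M) y u) (\<mu>, \<nu>, a, b, c)) (Mk lB)"
    unfolding Pat_msk[OF d] using TTC inj_msk[OF d] by (subst asum_reindex) (auto simp: Mk_def split: option.split)
  also have "\<dots> = hs \<mu> (hs \<nu> (y a) (u a) (y b) (u b)) (op (bvec (\<nu>, lL)) (u a) (u b)) (y c) (u c)"
  proof (cases lB)
    case None
    show ?thesis unfolding TT_def hs_def opB_def Mk_def using None y u ne
      by (simp add: Mk_def asum_insert TT_def zS_def msk_def lab_def labAB_def hs_def opB_def op_addl pl_assoc)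
  next
    case (Some l)
    show ?thesis unfolding TT_def hs_def opB_def Mk_def using Some y u ne
      by (simp add: Mk_def asum_insert TT_def zS_def msk_def lab_def labAB_def hs_def opB_def op_addl pl_assoc emb_bvec)
  qed
  finally show ?thesis by simp
qed

end

context hsetup
begin

lemma kvHat: "kv Hat" by (unfold_locales) (rule Hat_kvs)

lemma Hat_asum: "finite I \<Longrightarrow> \<forall>i\<in>I. f i \<in> C \<and> g i \<in> C \<Longrightarrow>
  asum Hat (\<lambda>i. (cls (f i), g i)) I = (cls (asum A f I), asum A g I)"
proof (induction I rule: finite_induct)
  case empty then show ?case using kv.asum_empty[OF kvHat] by (simp add: Hat_zero)
next
  case (insert x F)
  have "asum Hat (\<lambda>i. (cls (f i), g i)) (insert x F) = addA Hat (cls (f x), g x) (asum Hat (\<lambda>i. (cls (f i), g i)) F)"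
    using insert by (intro kv.asum_insert[OF kvHat]) (auto simp: Hat_carr)
  then show ?case using insert by (simp add: Hat_add asum_insert)
qed

lemma eqv_lab: "x \<in> C \<Longrightarrow> y \<in> C \<Longrightarrow> w \<in> C \<Longrightarrow>
  eqv (op (bvec (\<mu>, p)) (op (bvec (\<nu>, q)) x y) w) (op (bvec (\<mu>, p')) (op (bvec (\<nu>, q')) x y) w)"
proof -
  assume a: "x \<in> C" "y \<in> C" "w \<in> C"
  have 1: "eqv (op (bvec (\<mu>, p)) (op (bvec (\<nu>, q)) x y) w) (op (bvec (\<mu>, p')) (op (bvec (\<nu>, q)) x y) w)"
    using a gen_any by (simp add: eqv_def)
  have "eqv (op (bvec (\<nu>, q)) x y) (op (bvec (\<nu>, q')) x y)" using a gen_any by (simp add: eqv_def)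
  then have 2: "eqv (op (bvec (\<mu>, p')) (op (bvec (\<nu>, q)) x y) w) (op (bvec (\<mu>, p')) (op (bvec (\<nu>, q')) x y) w)"
    using a by (intro eqv_op eqv_refl)
  show ?thesis using eqv_trans[OF 1 2] .
qed

lemma Pat_finite: "finite (Pat lB)" by simp

lemma X1_Pat: "{X1} \<in> Pat lB" by (simp add: Pat_def)

lemma Hat_rel:
  assumes r: "r \<in> snd P" and x: "\<forall>i. x i \<in> carr Hat"
  shows "eval3 Hat r x = zeroA Hat"
proof -
  define u where "u i = rep (fst (x i))" for i
  define y where "y i = snd (x i)" for i
  have uC: "\<forall>i. u i \<in> C"
  proof
    fix i have "fst (x i) \<in> Cl" using x by (auto simp: Hat_carr mem_Times_iff)
    then show "u i \<in> C" unfolding u_def by (rule rep_C)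
  qed
  have yC: "\<forall>i. y i \<in> C" using x by (auto simp: y_def Hat_carr mem_Times_iff)
  have xi: "x i = (cls (u i), y i)" for i
  proof -
    have "fst (x i) \<in> Cl" using x by (auto simp: Hat_carr mem_Times_iff)
    then show ?thesis using cls_rep by (simp add: u_def y_def prod_eq_iff)
  qed
  define FP where "FP = (\<lambda>(\<mu>, \<nu>, a, b, c). op (bvec (\<mu>, lL)) (op (bvec (\<nu>, lL)) (u a) (u b)) (u c))"
  define SP where "SP = (\<lambda>(\<mu>, \<nu>, a, b, c). hs \<mu> (hs \<nu> (y a) (u a) (y b) (u b)) (op (bvec (\<nu>, lL)) (u a) (u b)) (y c) (u c))"
  have FPC: "FP m \<in> C" for m using uC by (simp add: FP_def split: prod.split)
  have SPC: "SP m \<in> C" for m using uC yC by (simp add: SP_def split: prod.split)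
  have G: "(\<lambda>(\<mu>, \<nu>, a, b, c). scaleA Hat (r (\<mu>, \<nu>, a, b, c)) (opA Hat (bvec \<mu>) (opA Hat (bvec \<nu>) (x a) (x b)) (x c)))
      = (\<lambda>m. (cls (sc (r m) (FP m)), sc (r m) (SP m)))"
    using uC yC by (auto simp: xi Hat_op_bvec Hat_sc FP_def SP_def)
  have ev: "eval3 Hat r x = (cls (asum A (\<lambda>m. sc (r m) (FP m)) UNIV), asum A (\<lambda>m. sc (r m) (SP m)) UNIV)"
    unfolding eval3_def G using FPC SPC by (intro Hat_asum) auto
  have snd0: "asum A (\<lambda>m. sc (r m) (SP m)) UNIV = z0"
  proof -
    have TTC: "TT S (zS S y u) m \<in> C" for S m using uC yC by (simp add: TT_def zS_def split: prod.split)
    have "asum A (\<lambda>m. sc (r m) (SP m)) UNIV = asum A (\<lambda>m. asum A (\<lambda>S. sc (r m) (TT S (zS S y u) m)) (Pat lB)) UNIV"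
    proof (intro asum_cong)
      fix m :: "'o \<times> 'o \<times> v3 \<times> v3 \<times> v3"
      obtain \<mu> \<nu> a b c where m: "m = (\<mu>, \<nu>, a, b, c)" by (cases m) auto
      show "sc (r m) (SP m) = asum A (\<lambda>S. sc (r m) (TT S (zS S y u) m)) (Pat lB)"
      proof (cases "dist3 a b c")
        case True
        then show ?thesis unfolding m SP_def using SND[OF True yC uC] TTC by (simp add: asum_sc)
      next
        case False
        then show ?thesis unfolding m using R_nondist[OF r False] TTC SPC by (simp add: asum_zero)
      qed
    qed simp
    also have "\<dots> = asum A (\<lambda>S. asum A (\<lambda>m. sc (r m) (TT S (zS S y u) m)) UNIV) (Pat lB)"
      using TTC by (intro asum_swap) auto
    also have "\<dots> = asum A (\<lambda>S. z0) (Pat lB)"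
    proof (intro asum_cong Pat_finite)
      fix S assume S: "S \<in> Pat lB"
      have "\<forall>i. zS S y u i \<in> C" using uC yC by (simp add: zS_def)
      then show "asum A (\<lambda>m. sc (r m) (TT S (zS S y u) m)) UNIV = z0" using EV[OF r S] by simp
    qed
    finally show ?thesis by (simp add: asum_zero)
  qed
  have fst0: "cls (asum A (\<lambda>m. sc (r m) (FP m)) UNIV) = cls z0"
  proof -
    have "eqv (asum A (\<lambda>m. sc (r m) (FP m)) UNIV) (asum A (\<lambda>m. sc (r m) (TT {X1} u m)) UNIV)"
    proof (intro eqv_asum ballI eqv_sc)
      fix m :: "'o \<times> 'o \<times> v3 \<times> v3 \<times> v3"
      obtain \<mu> \<nu> a b c where m: "m = (\<mu>, \<nu>, a, b, c)" by (cases m) auto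
      show "eqv (FP m) (TT {X1} u m)" unfolding m FP_def TT_def using uC by (simp add: eqv_lab)
    qed simp
    moreover have "asum A (\<lambda>m. sc (r m) (TT {X1} u m)) UNIV = z0" using EV[OF r X1_Pat uC] .
    ultimately show ?thesis by (simp add: cls_eqI)
  qed
  show ?thesis using ev snd0 fst0 by (simp add: Hat_zero)
qed

lemma Hat_alg: "is_alg P Hat"
  using Hat_rel by (intro Hat_is_alg) blast

end

context hsetup
begin

definition E :: "bool \<Rightarrow> 'a \<Rightarrow> 'a set \<times> 'a" where
  "E k x = (if k then (cls z0, x) else (cls x, z0))"

definition WW :: "bool \<Rightarrow> bool \<Rightarrow> ('o \<Rightarrow> 'k) \<Rightarrow> ('o \<times> 'l \<Rightarrow> 'k)" where
  "WW k1 k2 v = (if k1 \<and> k2 then (case lB of None \<Rightarrow> (\<lambda>i. 0) | Some l \<Rightarrow> emb l v)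
     else if k2 then emb lR v else emb lL v)"

lemma E_mem: "x \<in> C \<Longrightarrow> E k x \<in> carr Hat" by (simp add: E_def Hat_carr)

lemma E_z0: "E k z0 = zeroA Hat" by (simp add: E_def Hat_zero)

lemma E_True_eq: "E True x = zeroA Hat \<longleftrightarrow> x = z0" by (simp add: E_def Hat_zero)

lemma Hat_op_E: "x \<in> C \<Longrightarrow> y \<in> C \<Longrightarrow> opA Hat v (E k1 x) (E k2 y) = E (k1 \<or> k2) (op (WW k1 k2 v) x y)"
proof -
  assume xy: "x \<in> C" "y \<in> C"
  have c0: "cls (op V z0 z0) = cls z0" "cls (op V x z0) = cls z0" "cls (op V z0 y) = cls z0" for V
    using xy by simp_all
  show ?thesis using xy
    by (cases k1; cases k2) (auto simp: E_def WW_def Hat_op opB_def split: option.split)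
qed

lemma Hat_sc_E: "x \<in> C \<Longrightarrow> scaleA Hat c (E k x) = E k (sc c x)"
  by (cases k) (simp_all add: E_def Hat_sc)

lemma Hat_asum_E: "finite I \<Longrightarrow> \<forall>i\<in>I. f i \<in> C \<Longrightarrow> asum Hat (\<lambda>i. E k (f i)) I = E k (asum A f I)"
  by (cases k) (simp_all add: E_def Hat_asum asum_zero)

lemma distr_E: "distr A a \<Longrightarrow> distr Hat (\<lambda>s. E k (a s))"
  by (simp add: distr_def E_mem)

lemma loc_E: "distr A a \<Longrightarrow> distr A b \<Longrightarrow>
  loc_coef Hat v (\<lambda>s. E k1 (a s)) (\<lambda>s. E k2 (b s)) N m n = E (k1 \<or> k2) (loc_coef A (WW k1 k2 v) a b N m n)"
  unfolding loc_coef_def distr_def by (simp add: Hat_op_E Hat_sc_E Hat_asum_E)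

lemma nprod_E: "distr A a \<Longrightarrow> distr A b \<Longrightarrow>
  nprod Hat v n (\<lambda>s. E k1 (a s)) (\<lambda>s. E k2 (b s)) = (\<lambda>s. E (k1 \<or> k2) (nprod A (WW k1 k2 v) n a b s))"
  unfolding nprod_def distr_def by (simp add: Hat_op_E Hat_sc_E Hat_asum_E)

lemma local_op_E: "distr A a \<Longrightarrow> distr A b \<Longrightarrow> local_op A (WW k1 k2 v) a b \<Longrightarrow>
  local_op Hat v (\<lambda>s. E k1 (a s)) (\<lambda>s. E k2 (b s))"
proof -
  assume h: "distr A a" "distr A b" "local_op A (WW k1 k2 v) a b"
  then obtain N where "\<forall>m n. loc_coef A (WW k1 k2 v) a b N m n = z0" unfolding local_op_def by blast
  then have "\<forall>m n. loc_coef Hat v (\<lambda>s. E k1 (a s)) (\<lambda>s. E k2 (b s)) N m n = zeroA Hat"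
    using h by (simp add: loc_E E_z0)
  then show ?thesis unfolding local_op_def by blast
qed

lemma local_E: "distr A a \<Longrightarrow> distr A b \<Longrightarrow> local A a b \<Longrightarrow> local Hat (\<lambda>s. E k1 (a s)) (\<lambda>s. E k2 (b s))"
  unfolding local_def using local_op_E by blast

lemma local_op_E_back: "distr A a \<Longrightarrow> distr A b \<Longrightarrow> k1 \<or> k2 \<Longrightarrow>
  local_op Hat v (\<lambda>s. E k1 (a s)) (\<lambda>s. E k2 (b s)) \<Longrightarrow> local_op A (WW k1 k2 v) a b"
  unfolding local_op_def by (simp add: loc_E E_True_eq)

lemma DT:
  assumes D: "dong_alg Hat"
    and d: "distr A a" "distr A b" "distr A c"
    and l: "local A a b" "local A b c" "local A a c"
    and k: "ka \<or> kb \<or> kc"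
  shows "local_op A (WW (ka \<or> kb) kc u) (nprod A (WW ka kb w) n a b) c \<and>
         local_op A (WW kc (ka \<or> kb) u) c (nprod A (WW ka kb w) n a b)"
proof -
  have "local Hat (nprod Hat w n (\<lambda>s. E ka (a s)) (\<lambda>s. E kb (b s))) (\<lambda>s. E kc (c s))"
    using D d l unfolding dong_alg_def by (simp add: distr_E local_E)
  then have "local Hat (\<lambda>s. E (ka \<or> kb) (nprod A (WW ka kb w) n a b s)) (\<lambda>s. E kc (c s))"
    using d by (simp add: nprod_E)
  then have h1: "local_op Hat u (\<lambda>s. E (ka \<or> kb) (nprod A (WW ka kb w) n a b s)) (\<lambda>s. E kc (c s))"
    and h2: "local_op Hat u (\<lambda>s. E kc (c s)) (\<lambda>s. E (ka \<or> kb) (nprod A (WW ka kb w) n a b s))"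
    unfolding local_def by auto
  have dn: "distr A (nprod A (WW ka kb w) n a b)" using d(1,2) by (rule nprod_C)
  show ?thesis using local_op_E_back[OF dn d(3) _ h1] local_op_E_back[OF d(3) dn _ h2] k by auto
qed

end

context hsetup
begin

lemma vec_decomp: fixes w :: "'o \<times> 'l \<Rightarrow> 'k" shows "w = (\<lambda>i. \<Sum>l\<in>UNIV. emb l (\<lambda>\<mu>. w (\<mu>, l)) i)"
proof
  fix i :: "'o \<times> 'l" obtain \<mu> p where i: "i = (\<mu>, p)" by fastforce
  show "w i = (\<Sum>l\<in>UNIV. emb l (\<lambda>\<mu>. w (\<mu>, l)) i)"
    unfolding i emb_def by (simp add: sum.delta)
qed

lemma nprod_eqv: "distr A a \<Longrightarrow> distr A b \<Longrightarrow> eqv (nprod A (emb l w) n a b s) (nprod A (emb l' w) n a b s)"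
  unfolding nprod_cf distr_def by (intro eqv_asum ballI eqv_sc eqv_emb) auto

lemma loc_eqv_l: "\<forall>s. eqv (D s) (D' s) \<Longrightarrow> distr A c \<Longrightarrow>
  loc_coef A (emb lR u) D c N m n = loc_coef A (emb lR u) D' c N m n"
  unfolding loc_coef_cf distr_def
proof (intro asum_cong)
  fix i assume "\<forall>s. eqv (D s) (D' s)" "\<forall>s. c s \<in> C"
  then show "sc (cf N i) (op (emb lR u) (D (m + int N - int i)) (c (n + int i))) =
    sc (cf N i) (op (emb lR u) (D' (m + int N - int i)) (c (n + int i)))" using eqv_opR by metis
qed simp

lemma loc_eqv_r: "\<forall>s. eqv (D s) (D' s) \<Longrightarrow> distr A c \<Longrightarrow>
  loc_coef A (emb lL u) c D N m n = loc_coef A (emb lL u) c D' N m n"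
  unfolding loc_coef_cf distr_def
proof (intro asum_cong)
  fix i assume "\<forall>s. eqv (D s) (D' s)" "\<forall>s. c s \<in> C"
  then show "sc (cf N i) (op (emb lL u) (c (m + int N - int i)) (D (n + int i))) =
    sc (cf N i) (op (emb lL u) (c (m + int N - int i)) (D' (n + int i)))" using eqv_opL by metis
qed simp

lemma Kp: "\<exists>ka kb. (ka \<or> kb) \<and> WW ka kb w = emb l w"
proof -
  have "l \<in> {lL, lR} \<union> set_option lB" using labs by blast
  then consider "l = lL" | "l = lR" | "lB = Some l" by auto
  then show ?thesis
  proof cases
    case 1 then show ?thesis by (intro exI[of _ True] exI[of _ False]) (simp add: WW_def)
  next
    case 2 then show ?thesis by (intro exI[of _ False] exI[of _ True]) (simp add: WW_def)
  next
    case 3 then show ?thesis unfolding WW_def by (intro exI[of _ True] exI[of _ True]) simp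
  qed
qed

context
  fixes a b c
  assumes D: "dong_alg Hat"
    and d: "distr A a" "distr A b" "distr A c"
    and l: "local A a b" "local A b c" "local A a c"
begin

lemma KEY1: "local_op A (emb l' u) (nprod A (emb l w) n a b) c"
proof (cases "l' = lR")
  case True
  have h: "local_op A (WW False True u) (nprod A (WW False False w) n a b) c"
    using DT[OF D d l, of False False True u w n] by simp
  have "local_op A (emb lR u) (nprod A (emb lL w) n a b) c" using h by (simp add: WW_def)
  then obtain N where N: "\<forall>m k. loc_coef A (emb lR u) (nprod A (emb lL w) n a b) c N m k = z0"
    unfolding local_op_def by blast
  have "\<forall>s. eqv (nprod A (emb l w) n a b s) (nprod A (emb lL w) n a b s)" using d nprod_eqv by blast
  then have "\<forall>m k. loc_coef A (emb lR u) (nprod A (emb l w) n a b) c N m k = z0"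
    using N d loc_eqv_l by simp
  then show ?thesis using True unfolding local_op_def by blast
next
  case False
  obtain ka kb where k: "ka \<or> kb" "WW ka kb w = emb l w" using Kp by blast
  have "l' \<in> {lL, lR} \<union> set_option lB" using labs by blast
  then have "WW True (l' \<noteq> lL) u = emb l' u" using False lLR by (auto simp: WW_def)
  then show ?thesis using DT[OF D d l, of ka kb "l' \<noteq> lL" u w n] k by auto
qed

lemma KEY2: "local_op A (emb l' u) c (nprod A (emb l w) n a b)"
proof (cases "l' = lL")
  case True
  have h: "local_op A (WW True False u) c (nprod A (WW False False w) n a b)"
    using DT[OF D d l, of False False True u w n] by simp
  have "local_op A (emb lL u) c (nprod A (emb lL w) n a b)" using h by (simp add: WW_def)
  then obtain N where N: "\<forall>m k. loc_coef A (emb lL u) c (nprod A (emb lL w) n a b) N m k = z0"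
    unfolding local_op_def by blast
  have "\<forall>s. eqv (nprod A (emb l w) n a b s) (nprod A (emb lL w) n a b s)" using d nprod_eqv by blast
  then have "\<forall>m k. loc_coef A (emb lL u) c (nprod A (emb l w) n a b) N m k = z0"
    using N d loc_eqv_r by simp
  then show ?thesis using True unfolding local_op_def by blast
next
  case False
  obtain ka kb where k: "ka \<or> kb" "WW ka kb w = emb l w" using Kp by blast
  have "l' \<in> {lL, lR} \<union> set_option lB" using labs by blast
  then have "WW (l' \<noteq> lR) True u = emb l' u" using False lLR by (auto simp: WW_def)
  then show ?thesis using DT[OF D d l, of ka kb "l' \<noteq> lR" u w n] k by auto
qed

lemma final_local: "local A (nprod A w n a b) c"
proof -
  define dl where "dl l = nprod A (emb l (\<lambda>\<mu>. w (\<mu>, l))) n a b" for l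
  have dd: "nprod A w n a b = (\<lambda>s. asum A (\<lambda>l. dl l s) UNIV)"
    unfolding dl_def by (subst vec_decomp) (rule nprod_vsum[OF finite_UNIV d(1,2)])
  have ddistr: "distr A (dl l)" for l unfolding dl_def using d by (intro nprod_C)
  have dD: "distr A (nprod A w n a b)" using d by (intro nprod_C)
  show ?thesis unfolding local_def
  proof (intro allI conjI)
    fix u
    have "local_op A (\<lambda>i. \<Sum>l'\<in>UNIV. emb l' (\<lambda>\<mu>. u (\<mu>, l')) i) (nprod A w n a b) c"
    proof (intro local_vsum finite_UNIV dD d ballI)
      fix l'
      show "local_op A (emb l' (\<lambda>\<mu>. u (\<mu>, l'))) (nprod A w n a b) c"
        unfolding dd using ddistr d KEY1 by (intro local_lsum) (auto simp: dl_def)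
    qed
    then show "local_op A u (nprod A w n a b) c" by (subst vec_decomp)
    have "local_op A (\<lambda>i. \<Sum>l'\<in>UNIV. emb l' (\<lambda>\<mu>. u (\<mu>, l')) i) c (nprod A w n a b)"
    proof (intro local_vsum finite_UNIV dD d ballI)
      fix l'
      show "local_op A (emb l' (\<lambda>\<mu>. u (\<mu>, l'))) c (nprod A w n a b)"
        unfolding dd using ddistr d KEY2 by (intro local_rsum) (auto simp: dl_def)
    qed
    then show "local_op A u c (nprod A w n a b)" by (subst vec_decomp)
  qed
qed

end

lemma dong_A: "dong_alg Hat \<Longrightarrow> dong_alg A"
  unfolding dong_alg_def[of A] using final_local by blast

end

definition enc :: "'a set \<times> 'a \<Rightarrow> ('a \<times> 'k::zero \<times> nat) set" where
  "enc p = (\<lambda>y. (y, 0, 0)) ` fst p \<union> {(snd p, 0, 1)}"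

lemma inj_enc: "inj (enc :: 'a set \<times> 'a \<Rightarrow> ('a \<times> 'k::zero \<times> nat) set)"
proof (rule injI)
  fix p q :: "'a set \<times> 'a"
  assume h: "(enc p :: ('a \<times> 'k \<times> nat) set) = enc q"
  have 1: "z \<in> fst p \<longleftrightarrow> (z, 0::'k, 0::nat) \<in> enc p" for z by (auto simp: enc_def)
  have 2: "z \<in> fst q \<longleftrightarrow> (z, 0::'k, 0::nat) \<in> enc q" for z by (auto simp: enc_def)
  have "fst p = fst q" using 1 2 h by blast
  moreover have "(snd p, 0::'k, 1::nat) \<in> enc q" using h by (auto simp: enc_def)
  then have "snd p = snd q" by (auto simp: enc_def)
  ultimately show "p = q" by (simp add: prod_eq_iff)
qed

context hsetup
begin

lemma dong_from_b:
  assumes D: "dong_in TYPE('b) P" and f: "inj (f :: ('a \<times> 'k \<times> nat) set \<Rightarrow> 'b)"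
  shows "dong_alg A"
proof -
  define g :: "'a set \<times> 'a \<Rightarrow> 'b" where "g = (\<lambda>p. f (enc p))"
  have g: "inj g" unfolding g_def using inj_compose[OF f inj_enc] by (simp add: comp_def)
  have "is_alg P (tr g Hat)" using tr_is_alg[OF g Hat_alg] .
  then have "dong_alg (tr g Hat)" using D unfolding dong_in_def by blast
  then have "dong_alg Hat" using tr_dong[OF g] by blast
  then show ?thesis by (rule dong_A)
qed

end

lemma di_setup:
  assumes bq: "bq_operad P" and A: "is_alg (di P) A"
  shows "hsetup P sel_perm swp_perm T1 T2 None (\<lambda>S. SOME k. k \<in> S) A"
proof
  show "is_alg (had_tau swp_perm (fst P), had_rel P sel_perm) A" using A by (simp add: di_def)
  show "bq_operad P" by fact
  show "UNIV = {T1, T2} \<union> set_option None" using two.exhaust by auto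
next
  fix S a b c assume S: "S \<in> Pat None" and d: "dist3 a b c"
  then obtain k where k: "S = {k}" by (auto simp: Pat_def card_1_singleton_iff)
  have ne: "a \<noteq> b" "b \<noteq> c" "a \<noteq> c" "b \<noteq> a" "c \<noteq> b" "c \<noteq> a" using d by (auto simp: dist3_def)
  have "k = a \<or> k = b \<or> k = c" using dist3_cases[OF d] by blast
  then show "sel_perm (fst (lab T1 T2 None S a b c)) (snd (lab T1 T2 None S a b c)) a b c = (SOME k. k \<in> S)"
    using ne unfolding k by (auto simp: lab_def labAB_def sel_perm_def)
qed (auto simp: sel_perm_def swp_perm_def)

lemma tri_setup:
  assumes bq: "bq_operad P" and A: "is_alg (tri P) A"
  shows "hsetup P sel_ct swp_ct C1 C2 (Some C12) id A"
proof
  show "is_alg (had_tau swp_ct (fst P), had_rel P sel_ct) A" using A by (simp add: tri_def)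
  show "bq_operad P" by fact
  show "UNIV = {C1, C2} \<union> set_option (Some C12)" using ct2.exhaust by auto
next
  fix S a b c assume S: "S \<in> Pat (Some C12)" and d: "dist3 a b c"
  have ne: "a \<noteq> b" "b \<noteq> c" "a \<noteq> c" "b \<noteq> a" "c \<noteq> b" "c \<noteq> a" using d by (auto simp: dist3_def)
  have Sne: "S \<noteq> {}" using S by (simp add: Pat_def)
  have Se: "S = msk a b c (a \<in> S, b \<in> S, c \<in> S)" using msk_eq[OF d] .
  show "sel_ct (fst (lab C1 C2 (Some C12) S a b c)) (snd (lab C1 C2 (Some C12) S a b c)) a b c = id S"
  proof (cases "a \<in> S"; cases "b \<in> S"; cases "c \<in> S")
  qed (subst (3) Se; use ne Sne Se in \<open>auto simp: lab_def labAB_def sel_ct_def ct_has1_def ct_has2_def msk_def\<close>)+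
qed (auto simp: sel_ct_def ct_has1_def ct_has2_def swp_ct_def)

theorem mainTheorem1:
  fixes P :: "('o::finite, 'k::field) bqop"
  assumes "bq_operad P"
    and "dong_in TYPE('b) P"
    and "\<exists>f :: ('a \<times> 'k \<times> nat) set \<Rightarrow> 'b. inj f"
  shows "dong_in TYPE('a) (di P) \<and> dong_in TYPE('a) (tri P)"
proof -
  obtain f :: "('a \<times> 'k \<times> nat) set \<Rightarrow> 'b" where f: "inj f" using assms(3) by blast
  have "dong_in TYPE('a) (di P)" unfolding dong_in_def
  proof (intro allI impI)
    fix A :: "('a, 'k, 'o \<times> two) alg" assume "is_alg (di P) A"
    then interpret hsetup P sel_perm swp_perm T1 T2 None "\<lambda>S. SOME k. k \<in> S" A
      using assms(1) by (rule di_setup[rotated])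
    show "dong_alg A" using dong_from_b[OF assms(2) f] .
  qed
  moreover have "dong_in TYPE('a) (tri P)" unfolding dong_in_def
  proof (intro allI impI)
    fix A :: "('a, 'k, 'o \<times> ct2) alg" assume "is_alg (tri P) A"
    then interpret hsetup P sel_ct swp_ct C1 C2 "Some C12" id A
      using assms(1) by (rule tri_setup[rotated])
    show "dong_alg A" using dong_from_b[OF assms(2) f] .
  qed
  ultimately show ?thesis ..
qed

end
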